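(* Let $p=4k+1$ be a prime and let $S\subset\mathbb{P}^5$ be the surface over $\mathbb{F}_p$ with homogeneous coordinates $x_0,\ldots,x_5$ defined by $$x_1^2-x_2^2=x_3^2,\qquad x_0^2-x_1^2=x_4^2,\qquad x_0^2-x_2^2=x_5^2 .$$ Let $S^0\subset S$ be the set of points all of whose coordinates are nonzero. Then $$|S^0(\mathbb{F}_p)|=|S(\mathbb{F}_p)|-24p+80,$$ and hence $$n_p(K_4)=\frac{1}{64}\cdot\frac{1}{24}\cdot(p-1)\big(|S(\mathbb{F}_p)|-24p+80\big).$$
   Context: For $p\equiv 1\pmod 4$, $n_p(K_4)$ is the number of $4$-tuples $(r_1,r_2,r_3,r_4)$ of pairwise distinct residues modulo $p$ such that all differences $r_i-r_j$ ($i\neq j$) are nonzero quadratic residues mod $p$, where tuples differing by a permutation of entries or by adding the same residue to all entries are identified. *)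

theory Defs
  imports "HOL-Number_Theory.Number_Theory"
begin

text \<open>Elements of F_p are represented by integers in {0..<p}; a vector in F_p^6
  is an int list of length 6 with entries in {0..<p} (index i = coordinate x_i).\<close>

definition Fp_vecs :: "int \<Rightarrow> int list set" where
  "Fp_vecs p = {x. length x = 6 \<and> set x \<subseteq> {0..<p}}"

definition on_S :: "int \<Rightarrow> int list \<Rightarrow> bool" where
  "on_S p x \<longleftrightarrow>
     [x!1^2 - x!2^2 = x!3^2] (mod p) \<and>
     [x!0^2 - x!1^2 = x!4^2] (mod p) \<and>
     [x!0^2 - x!2^2 = x!5^2] (mod p)"

definition proj_pt :: "int \<Rightarrow> int list \<Rightarrow> int list set" where
  "proj_pt p x = {map (\<lambda>a. (c * a) mod p) x | c. c \<in> {1..<p}}"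

definition S_pts :: "int \<Rightarrow> int list set set" where
  "S_pts p = {proj_pt p x | x. x \<in> Fp_vecs p \<and> x \<noteq> replicate 6 0 \<and> on_S p x}"

definition S0_pts :: "int \<Rightarrow> int list set set" where
  "S0_pts p = {proj_pt p x | x. x \<in> Fp_vecs p \<and> (\<forall>i<6. x!i \<noteq> 0) \<and> on_S p x}"

text \<open>n_p(K_4): 4-tuples of pairwise distinct residues with all differences nonzero
  quadratic residues, modulo permutation (so: 4-element subsets) and modulo
  common translation.\<close>
definition K4_sets :: "int \<Rightarrow> int set set" where
  "K4_sets p = {A. A \<subseteq> {0..<p} \<and> card A = 4 \<and>
                  (\<forall>a\<in>A. \<forall>b\<in>A. a \<noteq> b \<longrightarrow> QuadRes p (a - b))}"

definition transl_class :: "int \<Rightarrow> int set \<Rightarrow> int set set" where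
  "transl_class p A = {(\<lambda>a. (a + t) mod p) ` A | t. t \<in> {0..<p}}"

definition n_K4 :: "int \<Rightarrow> nat" where
  "n_K4 p = card {transl_class p A | A. A \<in> K4_sets p}"

end

theory Submission
  imports Defs
begin


lemma card_group:
  assumes "finite S" "finite T" "g ` S \<subseteq> T"
  shows "card S = (\<Sum>y\<in>T. card {x\<in>S. g x = y})"
  using sum.group[OF assms, of "\<lambda>_. 1::nat"] by simp

locale pp =
  fixes p :: int
  assumes prime_p: "prime p" and p_mod4: "p mod 4 = 1"
begin

lemma p_gt: "p > 4"
proof -
  have "p > 1" using prime_p prime_gt_1_int by blast
  then show ?thesis using p_mod4 by presburger
qed

lemma dvd_sq_iff: "p dvd y^2 \<longleftrightarrow> p dvd y"
  using prime_dvd_power_iff[OF prime_p, of 2 y] by simp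

lemma F_dvd: "y \<in> {0..<p} \<Longrightarrow> p dvd y \<longleftrightarrow> y = 0"
  using p_gt by (auto simp: dvd_eq_mod_eq_0)

lemma F_sq0: "y \<in> {0..<p} \<Longrightarrow> y^2 mod p = 0 \<longleftrightarrow> y = 0"
  using F_dvd dvd_sq_iff by (simp add: dvd_eq_mod_eq_0[symmetric])

lemma sq_eq: "z^2 mod p = y^2 mod p \<Longrightarrow> z mod p = y mod p \<or> z mod p = (-y) mod p"
proof -
  assume "z^2 mod p = y^2 mod p"
  then have "p dvd z^2 - y^2" by (simp add: mod_eq_dvd_iff)
  moreover have "z^2 - y^2 = (z - y) * (z - (-y))" by (simp add: power2_eq_square algebra_simps)
  ultimately have "p dvd (z - y) \<or> p dvd (z - (-y))"
    using prime_dvd_mult_iff[OF prime_p] by metis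
  then show ?thesis by (simp add: mod_eq_dvd_iff)
qed

definition sq :: "int \<Rightarrow> int set" where
  "sq d = {y \<in> {0..<p}. y^2 mod p = d mod p}"

definition ns :: "int \<Rightarrow> int" where
  "ns d = int (card (sq d))"

lemma finite_sq: "finite (sq d)" unfolding sq_def by (rule finite_subset[of _ "{0..<p}"]) auto

lemma ns_mod: "ns (d mod p) = ns d" unfolding ns_def sq_def by simp

lemma ns_0: assumes "d mod p = 0" shows "ns d = 1"
proof -
  have "sq d = {0}" using assms F_dvd dvd_sq_iff p_gt unfolding sq_def by (auto simp: dvd_eq_mod_eq_0[symmetric])
  then show ?thesis unfolding ns_def by simp
qed

lemma QR_mod: "QuadRes p (d mod p) = QuadRes p d"
  unfolding QuadRes_def cong_def by simp

lemma QR_cong: "d mod p = e mod p \<Longrightarrow> QuadRes p d = QuadRes p e"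
  by (metis QR_mod)

lemma ns_nz: assumes "d mod p \<noteq> 0" shows "ns d = (if QuadRes p d then 2 else 0)"
proof (cases "QuadRes p d")
  case True
  then obtain y where y: "y^2 mod p = d mod p" unfolding QuadRes_def cong_def by blast
  define y0 where "y0 = y mod p"
  have y0F: "y0 \<in> {0..<p}" unfolding y0_def using p_gt by simp
  have y0sq: "y0^2 mod p = d mod p" unfolding y0_def using y by (simp add: power_mod)
  have y0nz: "y0 \<noteq> 0" using y0sq assms by auto
  have sq_eq2: "sq d = {y0, p - y0}"
  proof
    show "sq d \<subseteq> {y0, p - y0}"
    proof
      fix z assume "z \<in> sq d"
      then have zF: "z \<in> {0..<p}" and z: "z^2 mod p = y0^2 mod p" unfolding sq_def using y0sq by auto
      from sq_eq[OF z] have "z mod p = y0 mod p \<or> z mod p = (-y0) mod p" .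
      moreover have "z mod p = z" "y0 mod p = y0" using zF y0F by auto
      moreover have "(-y0) mod p = p - y0" using y0F y0nz
        by (simp add: zmod_zminus1_eq_if)
      ultimately show "z \<in> {y0, p - y0}" by auto
    qed
  next
    have "(p - y0)^2 mod p = y0^2 mod p"
    proof -
      have "(p - y0)^2 = y0^2 + p * (p - 2*y0)" by (simp add: power2_eq_square algebra_simps)
      then show ?thesis by simp
    qed
    then show "{y0, p - y0} \<subseteq> sq d" using y0F y0sq y0nz unfolding sq_def by auto
  qed
  have "y0 \<noteq> p - y0"
  proof
    assume "y0 = p - y0"
    then have "p = 2 * y0" by simp
    then show False using p_mod4 by presburger
  qed
  then have "ns d = 2" unfolding ns_def sq_eq2 by simp
  then show ?thesis using True by simp
next
  case False
  have "sq d = {}" using False unfolding sq_def QuadRes_def cong_def by auto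
  then show ?thesis using False unfolding ns_def by simp
qed

lemma minus1_QR: "QuadRes p (-1)"
proof -
  have "p = (p div 4) * 4 + 1" using p_mod4 div_mult_mod_eq[of p 4] by simp
  then have "nat p = 4 * nat (p div 4) + 1" using p_gt by linarith
  then have "(nat p - 1) div 2 = 2 * nat (p div 4)" by simp
  then have ev: "even ((nat p - 1) div 2)" by simp
  have "[Legendre (-1) p = (-1) ^ ((nat p - 1) div 2)] (mod p)"
  proof -
    have q: "p = int (nat p)" using p_gt by simp
    have "prime (nat p)" using prime_p q by (metis prime_nat_iff_prime)
    moreover have "2 < nat p" using p_gt by simp
    ultimately show ?thesis using euler_criterion[of "nat p" "-1"] q by simp
  qed
  then have L: "[Legendre (-1) p = 1] (mod p)" using ev
    by (simp add: even_nat_iff pos_int_cases)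
  have n0: "\<not> [-1 = 0] (mod p)" using p_gt by (simp add: cong_def zmod_zminus1_eq_if)
  show ?thesis
  proof (rule ccontr)
    assume "\<not> QuadRes p (-1)"
    then have "Legendre (-1) p = -1" unfolding Legendre_def using n0 by simp
    with L have "(-1) mod p = 1 mod p" by (simp add: cong_def)
    then have "p dvd 2" by (simp add: mod_eq_dvd_iff)
    then show False using p_gt by (simp add: zdvd_not_zless)
  qed
qed

lemma QR_neg1: "QuadRes p d \<Longrightarrow> QuadRes p (-d)"
proof -
  assume "QuadRes p d"
  then obtain y where y: "y^2 mod p = d mod p" unfolding QuadRes_def cong_def by blast
  obtain i where i: "i^2 mod p = (-1) mod p" using minus1_QR unfolding QuadRes_def cong_def by blast
  have "(i*y)^2 mod p = ((i^2 mod p) * (y^2 mod p)) mod p" by (simp add: power_mult_distrib mod_mult_eq)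
  also have "\<dots> = ((-1) * d) mod p" using i y by (simp add: mod_mult_eq)
  finally show ?thesis unfolding QuadRes_def cong_def by auto
qed

lemma QR_neg: "QuadRes p (-d) = QuadRes p d"
  using QR_neg1[of d] QR_neg1[of "-d"] by auto

lemma ns_neg: "ns (-d) = ns d"
proof (cases "d mod p = 0")
  case True
  then have "(-d) mod p = 0" by (simp add: zmod_zminus1_eq_if)
  then show ?thesis using True ns_0 by simp
next
  case False
  have "d mod p < p" using p_gt by simp
  then have "(-d) mod p \<noteq> 0" using False by (simp add: zmod_zminus1_eq_if)
  then show ?thesis using False ns_nz QR_neg by simp
qed

lemma ns_swap: "ns (a - b) = ns (b - a)"
  using ns_neg[of "b - a"] by simp

lemma ns_cases: "d mod p \<noteq> 0 \<Longrightarrow> ns d = 0 \<or> ns d = 2"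
  using ns_nz by simp

lemma sum_ns: "(\<Sum>d\<in>{0..<p}. ns d) = p"
proof -
  have "card {0..<p} = (\<Sum>d\<in>{0..<p}. card {y\<in>{0..<p}. y^2 mod p = d})"
    by (rule card_group) (use p_gt in auto)
  also have "\<dots> = (\<Sum>d\<in>{0..<p}. card (sq d))"
    by (rule sum.cong) (auto simp: sq_def)
  finally have "int (card {0..<p}) = (\<Sum>d\<in>{0..<p}. ns d)" unfolding ns_def by simp
  then show ?thesis using p_gt by simp
qed

end


context pp begin

lemma F_eq: "x \<in> {0..<p} \<Longrightarrow> y \<in> {0..<p} \<Longrightarrow> x mod p = y mod p \<Longrightarrow> x = y"
  by simp

lemma dvd2: "p dvd 2 * z \<Longrightarrow> p dvd z"
proof -
  assume "p dvd 2 * z"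
  moreover have "\<not> p dvd 2" using p_gt by (simp add: zdvd_not_zless)
  ultimately show ?thesis using prime_dvd_mult_iff[OF prime_p] by blast
qed

lemma mod_eq_swap: "(b - w) mod p = a mod p \<longleftrightarrow> w mod p = (b - a) mod p"
proof -
  have "b - w - a = - (w - (b - a))" by simp
  then show ?thesis by (metis mod_eq_dvd_iff dvd_minus_iff)
qed

lemma inv_ex: assumes "s \<in> {1..<p}" shows "\<exists>x. (s * x) mod p = 1"
proof -
  have "\<not> p dvd s" using assms by (auto simp: zdvd_not_zless)
  then have "coprime p s" using prime_imp_coprime[OF prime_p] by blast
  then have "coprime s p" by (simp add: coprime_commute)
  then obtain x where "[s * x = 1] (mod p)" using cong_solve_coprime_int by blast
  then show ?thesis using p_gt by (auto simp: cong_def)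
qed

lemma card_Y: assumes "a mod p \<noteq> 0"
  shows "card {(s,t). s \<in> {0..<p} \<and> t \<in> {0..<p} \<and> (s*t) mod p = a mod p} = p - 1"
proof -
  define Y where "Y = {(s,t). s \<in> {0..<p} \<and> t \<in> {0..<p} \<and> (s*t) mod p = a mod p}"
  have fY: "finite Y" unfolding Y_def
    by (rule finite_subset[of _ "{0..<p} \<times> {0..<p}"]) auto
  have "card Y = (\<Sum>s\<in>{0..<p}. card {x\<in>Y. fst x = s})"
    by (rule card_group) (use fY in \<open>auto simp: Y_def\<close>)
  also have "\<dots> = (\<Sum>s\<in>{0..<p}. if s = 0 then 0 else 1)"
  proof (rule sum.cong)
    fix s assume sF: "s \<in> {0..<p}"
    show "card {x\<in>Y. fst x = s} = (if s = 0 then 0 else 1)"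
    proof (cases "s = 0")
      case True
      have e: "{x\<in>Y. fst x = s} = {}" using assms True unfolding Y_def by auto
      show ?thesis unfolding e using True by simp
    next
      case False
      then have s1: "s \<in> {1..<p}" using sF by auto
      obtain x where x: "(s * x) mod p = 1" using inv_ex[OF s1] by blast
      define t0 where "t0 = (a * x) mod p"
      have t0F: "t0 \<in> {0..<p}" unfolding t0_def using p_gt by simp
      have st0: "(s * t0) mod p = a mod p"
      proof -
        have "(s * t0) mod p = (a * ((s * x) mod p)) mod p" unfolding t0_def
          by (simp add: mod_simps algebra_simps)
        then show ?thesis using x by simp
      qed
      have "{x\<in>Y. fst x = s} = {(s, t0)}"
      proof
        show "{(s, t0)} \<subseteq> {x\<in>Y. fst x = s}" using sF t0F st0 unfolding Y_def by auto
        show "{x\<in>Y. fst x = s} \<subseteq> {(s, t0)}"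
        proof
          fix y assume "y \<in> {x\<in>Y. fst x = s}"
          then obtain t where y: "y = (s, t)" and tF: "t \<in> {0..<p}" and st: "(s*t) mod p = a mod p"
            unfolding Y_def by auto
          have "(s*t) mod p = (s*t0) mod p" using st st0 by simp
          then have "p dvd s * t - s * t0" by (simp add: mod_eq_dvd_iff)
          then have "p dvd s * (t - t0)" by (simp add: algebra_simps)
          moreover have "\<not> p dvd s" using s1 by (auto simp: zdvd_not_zless)
          ultimately have "p dvd t - t0" using prime_dvd_mult_iff[OF prime_p] by blast
          then have "t mod p = t0 mod p" by (simp add: mod_eq_dvd_iff)
          then have "t = t0" using tF t0F by simp
          then show "y \<in> {(s, t0)}" using y by simp
        qed
      qed
      then show ?thesis using False by simp
    qed
  qed simp
  also have "\<dots> = card ({0..<p} - {0})"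
    by (simp add: sum.If_cases Diff_eq)
  finally have "card Y = card ({0..<p} - {0})" .
  then show ?thesis unfolding Y_def using p_gt by simp
qed

lemma card_X: assumes "a mod p \<noteq> 0"
  shows "card {(v,w). v \<in> {0..<p} \<and> w \<in> {0..<p} \<and> (v^2 - w^2) mod p = a mod p} = p - 1"
proof -
  define X where "X = {(v,w). v \<in> {0..<p} \<and> w \<in> {0..<p} \<and> (v^2 - w^2) mod p = a mod p}"
  define Y where "Y = {(s,t). s \<in> {0..<p} \<and> t \<in> {0..<p} \<and> (s*t) mod p = a mod p}"
  define f where "f = (\<lambda>(v::int,w::int). ((v - w) mod p, (v + w) mod p))"
  have inj: "inj_on f X"
  proof (rule inj_onI)
    fix x y assume xX: "x \<in> X" and yX: "y \<in> X" and fxy: "f x = f y"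
    obtain v w where x: "x = (v,w)" by fastforce
    obtain v' w' where y: "y = (v',w')" by fastforce
    have vF: "v \<in> {0..<p}" "w \<in> {0..<p}" "v' \<in> {0..<p}" "w' \<in> {0..<p}"
      using xX yX x y unfolding X_def by auto
    have e1: "p dvd (v - w) - (v' - w')" and e2: "p dvd (v + w) - (v' + w')"
      using fxy x y unfolding f_def by (auto simp: mod_eq_dvd_iff)
    have "p dvd ((v - w) - (v' - w')) + ((v + w) - (v' + w'))" using e1 e2 by (rule dvd_add)
    then have "p dvd 2 * (v - v')" by (simp add: algebra_simps)
    then have "p dvd v - v'" by (rule dvd2)
    then have "v = v'" using vF by (simp add: mod_eq_dvd_iff[symmetric])
    have "p dvd ((v + w) - (v' + w')) - ((v - w) - (v' - w'))" by (rule dvd_diff[OF e2 e1])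
    then have "p dvd 2 * (w - w')" by (simp add: algebra_simps)
    then have "p dvd w - w'" by (rule dvd2)
    then have "w = w'" using vF by (simp add: mod_eq_dvd_iff[symmetric])
    show "x = y" using x y \<open>v = v'\<close> \<open>w = w'\<close> by simp
  qed
  have img: "f ` X = Y"
  proof
    show "f ` X \<subseteq> Y"
    proof
      fix z assume "z \<in> f ` X"
      then obtain v w where z: "z = f (v,w)" and vw: "(v,w) \<in> X" by auto
      have "((v - w) mod p * ((v + w) mod p)) mod p = ((v-w)*(v+w)) mod p"
        by (simp add: mod_mult_eq)
      also have "\<dots> = (v^2 - w^2) mod p" by (simp add: power2_eq_square algebra_simps)
      finally show "z \<in> Y" using vw p_gt unfolding z f_def X_def Y_def by auto
    qed
  next
    show "Y \<subseteq> f ` X"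
    proof
      fix z assume zY: "z \<in> Y"
      then obtain s t where z: "z = (s,t)" and sF: "s \<in> {0..<p}" "t \<in> {0..<p}"
        and st: "(s*t) mod p = a mod p" unfolding Y_def by auto
      define h where "h = (p + 1) div 2"
      have h2: "2 * h = p + 1" unfolding h_def using p_mod4 by presburger
      define v where "v = ((s + t) * h) mod p"
      define w where "w = ((t - s) * h) mod p"
      have "(v - w) mod p = ((s + t) * h - (t - s) * h) mod p" unfolding v_def w_def
        by (simp add: mod_simps)
      also have "(s + t) * h - (t - s) * h = s * (2 * h)" by (simp add: algebra_simps)
      also have "\<dots> = s + s * p" using h2 by (simp add: algebra_simps)
      finally have e1: "(v - w) mod p = s" using sF by simp
      have "(v + w) mod p = ((s + t) * h + (t - s) * h) mod p" unfolding v_def w_def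
        by (simp add: mod_simps)
      also have "(s + t) * h + (t - s) * h = t * (2 * h)" by (simp add: algebra_simps)
      also have "\<dots> = t + t * p" using h2 by (simp add: algebra_simps)
      finally have e2: "(v + w) mod p = t" using sF by simp
      have "(v^2 - w^2) mod p = ((v - w) * (v + w)) mod p" by (simp add: power2_eq_square algebra_simps)
      also have "\<dots> = (((v - w) mod p) * ((v + w) mod p)) mod p" by (simp add: mod_mult_eq)
      also have "\<dots> = a mod p" using e1 e2 st by simp
      finally have "(v,w) \<in> X" unfolding X_def v_def w_def using p_gt by auto
      moreover have "f (v,w) = z" unfolding f_def z using e1 e2 by simp
      ultimately show "z \<in> f ` X" by force
    qed
  qed
  have "card X = card Y" using card_image[OF inj] img by simp
  then show ?thesis using card_Y[OF assms] unfolding X_def Y_def by simp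
qed

lemma sum_ns_pair: assumes "a mod p \<noteq> 0"
  shows "(\<Sum>b\<in>{0..<p}. ns b * ns (b - a)) = p - 1"
proof -
  define X where "X = {(v,w). v \<in> {0..<p} \<and> w \<in> {0..<p} \<and> (v^2 - w^2) mod p = a mod p}"
  have fX: "finite X" unfolding X_def
    by (rule finite_subset[of _ "{0..<p} \<times> {0..<p}"]) auto
  have "card X = (\<Sum>b\<in>{0..<p}. card {x\<in>X. (fst x)^2 mod p = b})"
    by (rule card_group) (use fX p_gt in \<open>auto simp: X_def\<close>)
  also have "\<dots> = (\<Sum>b\<in>{0..<p}. card (sq b \<times> sq (b - a)))"
  proof (rule sum.cong)
    fix b assume bF: "b \<in> {0..<p}"
    have "{x\<in>X. (fst x)^2 mod p = b} = sq b \<times> sq (b - a)"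
    proof (intro subset_antisym subsetI)
      fix z assume "z \<in> {x\<in>X. (fst x)^2 mod p = b}"
      then obtain v w where z: "z = (v,w)" and vw: "(v,w) \<in> X" and vb: "v^2 mod p = b"
        by (cases z) auto
      have "w^2 mod p = (v^2 - a) mod p" using vw mod_eq_swap unfolding X_def by auto
      also have "\<dots> = (v^2 mod p - a) mod p" by (simp add: mod_diff_left_eq)
      finally show "z \<in> sq b \<times> sq (b - a)" using z bF vw vb unfolding X_def sq_def by auto
    next
      fix z assume "z \<in> sq b \<times> sq (b - a)"
      then obtain v w where z: "z = (v,w)" and v: "v \<in> sq b" and w: "w \<in> sq (b - a)" by auto
      have vb: "v^2 mod p = b" using v bF unfolding sq_def by auto
      have "(v^2 - w^2) mod p = (v^2 mod p - w^2 mod p) mod p" by (simp add: mod_diff_eq)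
      also have "\<dots> = (b - (b - a) mod p) mod p" using vb w unfolding sq_def by simp
      also have "\<dots> = a mod p" by (simp add: mod_diff_right_eq)
      finally show "z \<in> {x\<in>X. (fst x)^2 mod p = b}" using z v w vb unfolding X_def sq_def by auto
    qed
    then show "card {x\<in>X. (fst x)^2 mod p = b} = card (sq b \<times> sq (b - a))" by simp
  qed simp
  finally have "int (card X) = (\<Sum>b\<in>{0..<p}. ns b * ns (b - a))"
    unfolding ns_def by (simp add: card_cartesian_product)
  then show ?thesis using card_X[OF assms] unfolding X_def by simp
qed

end


context pp begin

lemma nz1: "a \<in> {1..<p} \<Longrightarrow> a mod p \<noteq> 0" by simp

lemma ns_sqr: "a mod p \<noteq> 0 \<Longrightarrow> ns a * ns a = 2 * ns a"
  using ns_cases[of a] by auto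

lemma H_sum: "(\<Sum>a\<in>{1..<p}. ns a) = p - 1"
proof -
  have "{0..<p} = insert 0 {1..<p}" using p_gt by auto
  then have "(\<Sum>a\<in>{0..<p}. ns a) = ns 0 + (\<Sum>a\<in>{1..<p}. ns a)" by simp
  then show ?thesis using sum_ns ns_0[of 0] by simp
qed

lemma inner_sum: assumes a: "a \<in> {1..<p}"
  shows "(\<Sum>b\<in>{1..<p} - {a}. ns b * ns (b - a)) = p - 1 - 2 * ns a"
proof -
  have "{0..<p} = insert 0 {1..<p}" using p_gt by auto
  then have "(\<Sum>b\<in>{0..<p}. ns b * ns (b - a)) = ns 0 * ns (0 - a) + (\<Sum>b\<in>{1..<p}. ns b * ns (b - a))"
    by simp
  also have "(\<Sum>b\<in>{1..<p}. ns b * ns (b - a)) = ns a * ns (a - a) + (\<Sum>b\<in>{1..<p} - {a}. ns b * ns (b - a))"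
    using a by (simp add: sum.remove)
  finally have "p - 1 = ns a + ns a + (\<Sum>b\<in>{1..<p} - {a}. ns b * ns (b - a))"
    using sum_ns_pair[OF nz1[OF a]] ns_0[of 0] ns_0[of "a - a"] ns_neg[of a] by simp
  then show ?thesis by simp
qed

lemma G_sum: "(\<Sum>(a,b)\<in>(SIGMA a:{1..<p}. {1..<p} - {a}). ns a * ns b * ns (b - a)) = (p - 1) * (p - 5)"
proof -
  have "(\<Sum>(a,b)\<in>(SIGMA a:{1..<p}. {1..<p} - {a}). ns a * ns b * ns (b - a))
      = (\<Sum>a\<in>{1..<p}. \<Sum>b\<in>{1..<p} - {a}. ns a * ns b * ns (b - a))"
    by (rule sum.Sigma[symmetric]) auto
  also have "\<dots> = (\<Sum>a\<in>{1..<p}. ns a * (p - 1 - 2 * ns a))"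
  proof (rule sum.cong)
    fix a assume a: "a \<in> {1..<p}"
    have "(\<Sum>b\<in>{1..<p} - {a}. ns a * ns b * ns (b - a)) = ns a * (\<Sum>b\<in>{1..<p} - {a}. ns b * ns (b - a))"
      by (simp add: sum_distrib_left mult.assoc)
    then show "(\<Sum>b\<in>{1..<p} - {a}. ns a * ns b * ns (b - a)) = ns a * (p - 1 - 2 * ns a)"
      using inner_sum[OF a] by simp
  qed simp
  also have "\<dots> = (\<Sum>a\<in>{1..<p}. (p - 5) * ns a)"
  proof (rule sum.cong)
    fix a assume a: "a \<in> {1..<p}"
    show "ns a * (p - 1 - 2 * ns a) = (p - 5) * ns a"
      using ns_sqr[OF nz1[OF a]] by (simp add: algebra_simps)
  qed simp
  also have "\<dots> = (p - 5) * (p - 1)" by (simp add: sum_distrib_left[symmetric] H_sum)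
  finally show ?thesis by simp
qed

end


lemma vec6: "length x = 6 \<Longrightarrow> x = [x!0, x!1, x!2, x!3, x!4, x!5]"
  by (simp add: list_eq_iff_nth_eq less_Suc_eq numeral_eq_Suc nth_Cons')

lemma all6: "(\<forall>i<6. P i) \<longleftrightarrow> P 0 \<and> P 1 \<and> P 2 \<and> P 3 \<and> P (4::nat) \<and> P 5"
proof -
  have "{..<6::nat} = {0,1,2,3,4,5}" by auto
  then show ?thesis by (auto simp: lessThan_iff[symmetric] simp del: lessThan_iff)
qed

context pp begin

definition AA :: "int list set" where "AA = {x \<in> Fp_vecs p. on_S p x}"

definition phi :: "int list \<Rightarrow> int \<times> int \<times> int" where
  "phi x = ((x!4)^2 mod p, (x!5)^2 mod p, (x!0)^2 mod p)"

definition ff :: "int \<times> int \<times> int \<Rightarrow> int" where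
  "ff r = (case r of (a,b,c) \<Rightarrow> ns c * ns (c - a) * ns (c - b) * ns (b - a) * ns a * ns b)"

definition LL :: "int \<times> int \<times> int \<times> int \<times> int \<times> int \<Rightarrow> int list" where
  "LL y = (case y of (y0,y1,y2,y3,y4,y5) \<Rightarrow> [y0,y1,y2,y3,y4,y5])"

lemma finite_Fp: "finite (Fp_vecs p)"
proof -
  have "Fp_vecs p = {xs. set xs \<subseteq> {0..<p} \<and> length xs = 6}" unfolding Fp_vecs_def by auto
  then show ?thesis using finite_lists_length_eq[of "{0..<p}" 6] by simp
qed

lemma finite_AA: "finite AA" unfolding AA_def using finite_Fp by simp

lemma dvd3: "p dvd u \<Longrightarrow> p dvd v \<Longrightarrow> p dvd w \<Longrightarrow> z = u - v - w \<Longrightarrow> p dvd z"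
  by (simp add: dvd_diff)

lemma sq_dvd: "y \<in> sq d \<longleftrightarrow> y \<in> {0..<p} \<and> p dvd y^2 - d"
  unfolding sq_def by (simp add: mod_eq_dvd_iff)

lemma modF_dvd: "c \<in> {0..<p} \<Longrightarrow> (u mod p = c) \<longleftrightarrow> p dvd u - c"
  by (metis atLeastLessThan_iff mod_eq_dvd_iff mod_pos_pos_trivial)

lemma on_S_dvd: "on_S p x \<longleftrightarrow>
   p dvd (x!1)^2 - (x!2)^2 - (x!3)^2 \<and> p dvd (x!0)^2 - (x!1)^2 - (x!4)^2 \<and> p dvd (x!0)^2 - (x!2)^2 - (x!5)^2"
  unfolding on_S_def cong_def by (simp add: mod_eq_dvd_iff)

lemma t2: "set x \<subseteq> {0..<p} \<Longrightarrow> i < length x \<Longrightarrow> x!i \<in> {0..<p}"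
  by (metis nth_mem subsetD)

lemma fiber1: assumes F: "a \<in> {0..<p}" "b \<in> {0..<p}" "c \<in> {0..<p}"
  and xA: "x \<in> AA" and ph: "phi x = (a,b,c)"
  shows "x \<in> LL ` (sq c \<times> sq (c-a) \<times> sq (c-b) \<times> sq (b-a) \<times> sq a \<times> sq b)"
proof -
  have xF: "x \<in> Fp_vecs p" and S: "on_S p x" using xA unfolding AA_def by auto
  have len: "length x = 6" and sx: "set x \<subseteq> {0..<p}" using xF unfolding Fp_vecs_def by auto
  have m0: "x!0 \<in> {0..<p}" and m1: "x!1 \<in> {0..<p}" and m2: "x!2 \<in> {0..<p}" and m3: "x!3 \<in> {0..<p}"
    and m4: "x!4 \<in> {0..<p}" and m5: "x!5 \<in> {0..<p}" using t2[OF sx] len by auto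
  have d4: "p dvd (x!4)^2 - a" and d5: "p dvd (x!5)^2 - b" and d0: "p dvd (x!0)^2 - c"
    using ph F unfolding phi_def by (auto simp: modF_dvd)
  have s1: "p dvd (x!1)^2 - (x!2)^2 - (x!3)^2" and s2: "p dvd (x!0)^2 - (x!1)^2 - (x!4)^2"
    and s3: "p dvd (x!0)^2 - (x!2)^2 - (x!5)^2" using S on_S_dvd by auto
  have d1: "p dvd (x!1)^2 - (c - a)" by (rule dvd3[OF d0 d4 s2]) simp
  have d2: "p dvd (x!2)^2 - (c - b)" by (rule dvd3[OF d0 d5 s3]) simp
  have d3: "p dvd (x!3)^2 - (b - a)" by (rule dvd3[OF d1 d2 s1]) simp
  have e: "x = LL (x!0, x!1, x!2, x!3, x!4, x!5)" unfolding LL_def prod.case by (rule vec6[OF len])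
  have "x!0 \<in> sq c" "x!1 \<in> sq (c-a)" "x!2 \<in> sq (c-b)" "x!3 \<in> sq (b-a)" "x!4 \<in> sq a" "x!5 \<in> sq b"
    using d0 d1 d2 d3 d4 d5 m0 m1 m2 m3 m4 m5 by (simp_all only: sq_dvd)
  then have "(x!0, x!1, x!2, x!3, x!4, x!5) \<in> sq c \<times> sq (c-a) \<times> sq (c-b) \<times> sq (b-a) \<times> sq a \<times> sq b"
    by blast
  then show ?thesis by (subst e) (rule imageI)
qed

lemma fiber2: assumes F: "a \<in> {0..<p}" "b \<in> {0..<p}" "c \<in> {0..<p}"
  and y: "y0 \<in> sq c" "y1 \<in> sq (c-a)" "y2 \<in> sq (c-b)" "y3 \<in> sq (b-a)" "y4 \<in> sq a" "y5 \<in> sq b"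
  shows "[y0,y1,y2,y3,y4,y5] \<in> AA" "phi [y0,y1,y2,y3,y4,y5] = (a,b,c)"
proof -
  have d: "p dvd y0^2 - c" "p dvd y1^2 - (c-a)" "p dvd y2^2 - (c-b)" "p dvd y3^2 - (b-a)"
     "p dvd y4^2 - a" "p dvd y5^2 - b" and mem: "y0 \<in> {0..<p}" "y1 \<in> {0..<p}" "y2 \<in> {0..<p}"
     "y3 \<in> {0..<p}" "y4 \<in> {0..<p}" "y5 \<in> {0..<p}" using y by (simp_all add: sq_dvd)
  have s1: "p dvd y1^2 - y2^2 - y3^2" by (rule dvd3[OF d(2) d(3) d(4)]) simp
  have s2: "p dvd y0^2 - y1^2 - y4^2" by (rule dvd3[OF d(1) d(2) d(5)]) simp
  have s3: "p dvd y0^2 - y2^2 - y5^2" by (rule dvd3[OF d(1) d(3) d(6)]) simp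
  have "on_S p [y0,y1,y2,y3,y4,y5]" unfolding on_S_dvd using s1 s2 s3 by simp
  moreover have "[y0,y1,y2,y3,y4,y5] \<in> Fp_vecs p" unfolding Fp_vecs_def using mem by simp
  ultimately show "[y0,y1,y2,y3,y4,y5] \<in> AA" unfolding AA_def by simp
  have "y4^2 mod p = a" "y5^2 mod p = b" "y0^2 mod p = c" using d F by (simp_all add: modF_dvd)
  then show "phi [y0,y1,y2,y3,y4,y5] = (a,b,c)" unfolding phi_def by simp
qed

lemma fiber: assumes F: "a \<in> {0..<p}" "b \<in> {0..<p}" "c \<in> {0..<p}"
  shows "{x \<in> AA. phi x = (a,b,c)} = LL ` (sq c \<times> sq (c-a) \<times> sq (c-b) \<times> sq (b-a) \<times> sq a \<times> sq b)"
proof (intro subset_antisym subsetI)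
  fix x assume "x \<in> {x \<in> AA. phi x = (a,b,c)}"
  then show "x \<in> LL ` (sq c \<times> sq (c-a) \<times> sq (c-b) \<times> sq (b-a) \<times> sq a \<times> sq b)"
    using fiber1[OF F] by blast
next
  fix x assume "x \<in> LL ` (sq c \<times> sq (c-a) \<times> sq (c-b) \<times> sq (b-a) \<times> sq a \<times> sq b)"
  then obtain y0 y1 y2 y3 y4 y5 where x: "x = [y0,y1,y2,y3,y4,y5]"
    and y: "y0 \<in> sq c" "y1 \<in> sq (c-a)" "y2 \<in> sq (c-b)" "y3 \<in> sq (b-a)" "y4 \<in> sq a" "y5 \<in> sq b"
    unfolding LL_def by auto
  show "x \<in> {x \<in> AA. phi x = (a,b,c)}" using fiber2[OF F y] x by simp
qed

lemma card_fiber: assumes "a \<in> {0..<p}" "b \<in> {0..<p}" "c \<in> {0..<p}"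
  shows "int (card {x \<in> AA. phi x = (a,b,c)}) = ff (a,b,c)"
proof -
  have "inj LL" unfolding LL_def by (rule injI) auto
  then have "card {x \<in> AA. phi x = (a,b,c)} = card (sq c \<times> sq (c-a) \<times> sq (c-b) \<times> sq (b-a) \<times> sq a \<times> sq b)"
    unfolding fiber[OF assms] by (simp add: card_image inj_on_subset)
  then show ?thesis unfolding ff_def ns_def by (simp add: card_cartesian_product)
qed

lemma phi_F: "x \<in> AA \<Longrightarrow> phi x \<in> {0..<p} \<times> {0..<p} \<times> {0..<p}"
  unfolding phi_def using p_gt by auto

lemma card_R: assumes "R \<subseteq> {0..<p} \<times> {0..<p} \<times> {0..<p}"
  shows "int (card {x \<in> AA. phi x \<in> R}) = (\<Sum>r\<in>R. ff r)"
proof -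
  have fR: "finite R" by (rule finite_subset[OF assms]) auto
  have "card {x \<in> AA. phi x \<in> R} = (\<Sum>r\<in>R. card {x \<in> {x \<in> AA. phi x \<in> R}. phi x = r})"
    by (rule card_group) (use fR finite_AA in auto)
  also have "\<dots> = (\<Sum>r\<in>R. card {x \<in> AA. phi x = r})"
  proof (rule sum.cong)
    fix r assume "r \<in> R"
    then have "{x \<in> {x \<in> AA. phi x \<in> R}. phi x = r} = {x \<in> AA. phi x = r}" by auto
    then show "card {x \<in> {x \<in> AA. phi x \<in> R}. phi x = r} = card {x \<in> AA. phi x = r}" by simp
  qed simp
  finally have "int (card {x \<in> AA. phi x \<in> R}) = (\<Sum>r\<in>R. int (card {x \<in> AA. phi x = r}))" by simp
  also have "\<dots> = (\<Sum>r\<in>R. ff r)"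
  proof (rule sum.cong)
    fix r assume "r \<in> R"
    then obtain a b c where r: "r = (a,b,c)" and F: "a \<in> {0..<p}" "b \<in> {0..<p}" "c \<in> {0..<p}"
      using assms by blast
    show "int (card {x \<in> AA. phi x = r}) = ff r" unfolding r using card_fiber[OF F] .
  qed simp
  finally show ?thesis .
qed

end

context pp begin

abbreviation "F3 \<equiv> {0..<p} \<times> {0..<p} \<times> {0..<p}"
abbreviation "D2 \<equiv> (SIGMA a:{1..<p}. {1..<p} - {a})"

lemma nz_diff: "x \<in> {1..<p} \<Longrightarrow> y \<in> {1..<p} \<Longrightarrow> x \<noteq> y \<Longrightarrow> (y - x) mod p \<noteq> 0"
proof
  assume xy: "x \<in> {1..<p}" "y \<in> {1..<p}" "x \<noteq> y" and "(y - x) mod p = 0"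
  then have "p dvd y - x" by (simp add: dvd_eq_mod_eq_0)
  then have "y mod p = x mod p" by (simp add: mod_eq_dvd_iff)
  then show False using xy by simp
qed

lemma sum_emb2:
  fixes e :: "int \<times> int \<Rightarrow> int \<times> int \<times> int" and pr :: "int \<times> int \<times> int \<Rightarrow> int \<times> int"
  assumes e1: "\<And>x y. (x,y) \<in> D2 \<Longrightarrow> e (x,y) \<in> F3 \<and> P (e (x,y))"
    and e2: "\<And>r. r \<in> F3 \<Longrightarrow> P r \<Longrightarrow> pr r \<in> D2 \<and> e (pr r) = r"
    and e3: "\<And>x y. (x,y) \<in> D2 \<Longrightarrow> pr (e (x,y)) = (x,y)"
    and e4: "\<And>x y. (x,y) \<in> D2 \<Longrightarrow> ff (e (x,y)) = 4 * (ns x * ns y * ns (y - x))"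
  shows "(\<Sum>r\<in>F3. if P r then ff r else 0) = 4 * ((p - 1) * (p - 5))"
proof -
  have "(\<Sum>r\<in>F3. if P r then ff r else 0) = (\<Sum>r\<in>{r\<in>F3. P r}. ff r)"
    by (rule sum.inter_filter[symmetric]) simp
  also have "\<dots> = (\<Sum>(x,y)\<in>D2. 4 * (ns x * ns y * ns (y - x)))"
  proof (rule sum.reindex_bij_witness[of _ e pr])
    fix r assume r: "r \<in> {r\<in>F3. P r}"
    then have rr: "pr r \<in> D2 \<and> e (pr r) = r" using e2 by blast
    then show "e (pr r) = r" "pr r \<in> D2" by auto
    obtain x y where xy: "pr r = (x,y)" by fastforce
    have "(x,y) \<in> D2" "e (x,y) = r" using rr xy by metis+
    then show "(case pr r of (x,y) \<Rightarrow> 4 * (ns x * ns y * ns (y - x))) = ff r"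
      using e4 xy by auto
  next
    fix d assume d: "d \<in> D2"
    obtain x y where xy: "d = (x,y)" by fastforce
    show "pr (e d) = d" "e d \<in> {r\<in>F3. P r}" using e1 e3 d xy by auto
  qed
  also have "\<dots> = 4 * (\<Sum>(x,y)\<in>D2. ns x * ns y * ns (y - x))"
    by (simp add: sum_distrib_left case_prod_unfold)
  finally show ?thesis using G_sum by simp
qed

lemma sum_emb1:
  fixes e :: "int \<Rightarrow> int \<times> int \<times> int" and pr :: "int \<times> int \<times> int \<Rightarrow> int"
  assumes e1: "\<And>x. x \<in> {1..<p} \<Longrightarrow> e x \<in> F3 \<and> P (e x)"
    and e2: "\<And>r. r \<in> F3 \<Longrightarrow> P r \<Longrightarrow> pr r \<in> {1..<p} \<and> e (pr r) = r"
    and e3: "\<And>x. x \<in> {1..<p} \<Longrightarrow> pr (e x) = x"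
    and e4: "\<And>x. x \<in> {1..<p} \<Longrightarrow> ff (e x) = k * ns x"
  shows "(\<Sum>r\<in>F3. if P r then ff r else 0) = k * (p - 1)"
proof -
  have "(\<Sum>r\<in>F3. if P r then ff r else 0) = (\<Sum>r\<in>{r\<in>F3. P r}. ff r)"
    by (rule sum.inter_filter[symmetric]) simp
  also have "\<dots> = (\<Sum>x\<in>{1..<p}. k * ns x)"
  proof (rule sum.reindex_bij_witness[of _ e pr])
    fix r assume r: "r \<in> {r\<in>F3. P r}"
    then have "pr r \<in> {1..<p} \<and> e (pr r) = r" using e2 by blast
    then show "e (pr r) = r" "pr r \<in> {1..<p}" by auto
    then show "k * ns (pr r) = ff r" using e4 by metis
  next
    fix d assume d: "d \<in> {1..<p}"
    show "pr (e d) = d" "e d \<in> {r\<in>F3. P r}" using e1 e3 d by auto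
  qed
  also have "\<dots> = k * (p - 1)" by (simp add: sum_distrib_left[symmetric] H_sum)
  finally show ?thesis .
qed

lemma ff2: assumes "(x,y) \<in> D2"
  shows "ff (0,x,y) = 4 * (ns x * ns y * ns (y - x))"
    "ff (x,0,y) = 4 * (ns x * ns y * ns (y - x))"
    "ff (x,y,0) = 4 * (ns x * ns y * ns (y - x))"
    "ff (x,x,y) = 4 * (ns x * ns y * ns (y - x))"
    "ff (x,y,x) = 4 * (ns x * ns y * ns (y - x))"
    "ff (x,y,y) = 4 * (ns x * ns y * ns (y - x))"
proof -
  have x: "x mod p \<noteq> 0" and y: "y mod p \<noteq> 0" and xy: "(y - x) mod p \<noteq> 0"
    using assms nz_diff by auto
  have n0: "ns 0 = 1" "ns (x - x) = 1" "ns (y - y) = 1" using ns_0 by auto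
  have sw: "ns (x - y) = ns (y - x)" by (rule ns_swap)
  have ng: "ns (- x) = ns x" "ns (- y) = ns y" using ns_neg by auto
  have c: "ns x = 0 \<or> ns x = 2" "ns y = 0 \<or> ns y = 2" "ns (y - x) = 0 \<or> ns (y - x) = 2"
    using ns_cases x y xy by auto
  show "ff (0,x,y) = 4 * (ns x * ns y * ns (y - x))"
    "ff (x,0,y) = 4 * (ns x * ns y * ns (y - x))"
    "ff (x,y,0) = 4 * (ns x * ns y * ns (y - x))"
    "ff (x,x,y) = 4 * (ns x * ns y * ns (y - x))"
    "ff (x,y,x) = 4 * (ns x * ns y * ns (y - x))"
    "ff (x,y,y) = 4 * (ns x * ns y * ns (y - x))"
    unfolding ff_def using c by (auto simp: n0 sw ng)
qed

lemma ff1: assumes "x \<in> {1..<p}"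
  shows "ff (0,x,x) = 8 * ns x" "ff (x,0,x) = 8 * ns x" "ff (x,x,0) = 8 * ns x"
    "ff (0,0,x) = 4 * ns x" "ff (0,x,0) = 4 * ns x" "ff (x,0,0) = 4 * ns x" "ff (x,x,x) = 4 * ns x"
proof -
  have x: "x mod p \<noteq> 0" using assms by auto
  have n0: "ns 0 = 1" "ns (x - x) = 1" using ns_0 by auto
  have ng: "ns (- x) = ns x" using ns_neg by auto
  have c: "ns x = 0 \<or> ns x = 2" using ns_cases x by auto
  show "ff (0,x,x) = 8 * ns x" "ff (x,0,x) = 8 * ns x" "ff (x,x,0) = 8 * ns x"
    "ff (0,0,x) = 4 * ns x" "ff (0,x,0) = 4 * ns x" "ff (x,0,0) = 4 * ns x" "ff (x,x,x) = 4 * ns x"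
    unfolding ff_def using c by (auto simp: n0 ng)
qed

end

context pp begin

definition PE :: "int \<times> int \<times> int \<Rightarrow> bool" where
  "PE r = (case r of (a,b,c) \<Rightarrow> \<not>(a\<noteq>0 \<and> b\<noteq>0 \<and> c\<noteq>0 \<and> a\<noteq>b \<and> a\<noteq>c \<and> b\<noteq>c) \<and> \<not>(a=0 \<and> b=0 \<and> c=0))"

lemma decomp: "(if PE r then (v::int) else 0) =
   (if (\<lambda>(a,b,c). a = 0 \<and> b \<noteq> 0 \<and> c \<noteq> 0 \<and> b \<noteq> c) r then v else 0) +
   (if (\<lambda>(a,b,c). b = 0 \<and> a \<noteq> 0 \<and> c \<noteq> 0 \<and> a \<noteq> c) r then v else 0) +
   (if (\<lambda>(a,b,c). c = 0 \<and> a \<noteq> 0 \<and> b \<noteq> 0 \<and> a \<noteq> b) r then v else 0) +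
   (if (\<lambda>(a,b,c). a = b \<and> a \<noteq> 0 \<and> c \<noteq> 0 \<and> a \<noteq> c) r then v else 0) +
   (if (\<lambda>(a,b,c). a = c \<and> a \<noteq> 0 \<and> b \<noteq> 0 \<and> a \<noteq> b) r then v else 0) +
   (if (\<lambda>(a,b,c). b = c \<and> a \<noteq> 0 \<and> b \<noteq> 0 \<and> a \<noteq> b) r then v else 0) +
   (if (\<lambda>(a,b,c). a = 0 \<and> b = c \<and> b \<noteq> 0) r then v else 0) +
   (if (\<lambda>(a,b,c). b = 0 \<and> a = c \<and> a \<noteq> 0) r then v else 0) +
   (if (\<lambda>(a,b,c). c = 0 \<and> a = b \<and> a \<noteq> 0) r then v else 0) +
   (if (\<lambda>(a,b,c). a = 0 \<and> b = 0 \<and> c \<noteq> 0) r then v else 0) +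
   (if (\<lambda>(a,b,c). a = 0 \<and> c = 0 \<and> b \<noteq> 0) r then v else 0) +
   (if (\<lambda>(a,b,c). b = 0 \<and> c = 0 \<and> a \<noteq> 0) r then v else 0) +
   (if (\<lambda>(a,b,c). a = b \<and> b = c \<and> a \<noteq> 0) r then v else 0)"
proof -
  obtain a b c where r: "r = (a,b,c)" by (cases r) auto
  show ?thesis unfolding r PE_def
    by (cases "a=0"; cases "b=0"; cases "c=0"; cases "a=b"; cases "a=c"; cases "b=c") auto
qed

lemma E_sum: "(\<Sum>r\<in>F3. if PE r then ff r else 0) = (p - 1) * (24 * p - 80)"
proof -
  have s1: "(\<Sum>r\<in>F3. if (\<lambda>(a,b,c). a = 0 \<and> b \<noteq> 0 \<and> c \<noteq> 0 \<and> b \<noteq> c) r then ff r else 0) = 4 * ((p - 1) * (p - 5))"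
    by (rule sum_emb2[where e="\<lambda>(x,y). (0,x,y)" and pr="\<lambda>(a,b,c). (b,c)"]) (auto simp: ff2)
  have s2: "(\<Sum>r\<in>F3. if (\<lambda>(a,b,c). b = 0 \<and> a \<noteq> 0 \<and> c \<noteq> 0 \<and> a \<noteq> c) r then ff r else 0) = 4 * ((p - 1) * (p - 5))"
    by (rule sum_emb2[where e="\<lambda>(x,y). (x,0,y)" and pr="\<lambda>(a,b,c). (a,c)"]) (auto simp: ff2)
  have s3: "(\<Sum>r\<in>F3. if (\<lambda>(a,b,c). c = 0 \<and> a \<noteq> 0 \<and> b \<noteq> 0 \<and> a \<noteq> b) r then ff r else 0) = 4 * ((p - 1) * (p - 5))"
    by (rule sum_emb2[where e="\<lambda>(x,y). (x,y,0)" and pr="\<lambda>(a,b,c). (a,b)"]) (auto simp: ff2)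
  have s4: "(\<Sum>r\<in>F3. if (\<lambda>(a,b,c). a = b \<and> a \<noteq> 0 \<and> c \<noteq> 0 \<and> a \<noteq> c) r then ff r else 0) = 4 * ((p - 1) * (p - 5))"
    by (rule sum_emb2[where e="\<lambda>(x,y). (x,x,y)" and pr="\<lambda>(a,b,c). (a,c)"]) (auto simp: ff2)
  have s5: "(\<Sum>r\<in>F3. if (\<lambda>(a,b,c). a = c \<and> a \<noteq> 0 \<and> b \<noteq> 0 \<and> a \<noteq> b) r then ff r else 0) = 4 * ((p - 1) * (p - 5))"
    by (rule sum_emb2[where e="\<lambda>(x,y). (x,y,x)" and pr="\<lambda>(a,b,c). (a,b)"]) (auto simp: ff2)
  have s6: "(\<Sum>r\<in>F3. if (\<lambda>(a,b,c). b = c \<and> a \<noteq> 0 \<and> b \<noteq> 0 \<and> a \<noteq> b) r then ff r else 0) = 4 * ((p - 1) * (p - 5))"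
    by (rule sum_emb2[where e="\<lambda>(x,y). (x,y,y)" and pr="\<lambda>(a,b,c). (a,b)"]) (auto simp: ff2)
  have s7: "(\<Sum>r\<in>F3. if (\<lambda>(a,b,c). a = 0 \<and> b = c \<and> b \<noteq> 0) r then ff r else 0) = 8 * (p - 1)"
    by (rule sum_emb1[where e="\<lambda>x. (0,x,x)" and pr="\<lambda>(a,b,c). b"]) (auto simp: ff1)
  have s8: "(\<Sum>r\<in>F3. if (\<lambda>(a,b,c). b = 0 \<and> a = c \<and> a \<noteq> 0) r then ff r else 0) = 8 * (p - 1)"
    by (rule sum_emb1[where e="\<lambda>x. (x,0,x)" and pr="\<lambda>(a,b,c). a"]) (auto simp: ff1)
  have s9: "(\<Sum>r\<in>F3. if (\<lambda>(a,b,c). c = 0 \<and> a = b \<and> a \<noteq> 0) r then ff r else 0) = 8 * (p - 1)"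
    by (rule sum_emb1[where e="\<lambda>x. (x,x,0)" and pr="\<lambda>(a,b,c). a"]) (auto simp: ff1)
  have s10: "(\<Sum>r\<in>F3. if (\<lambda>(a,b,c). a = 0 \<and> b = 0 \<and> c \<noteq> 0) r then ff r else 0) = 4 * (p - 1)"
    by (rule sum_emb1[where e="\<lambda>x. (0,0,x)" and pr="\<lambda>(a,b,c). c"]) (auto simp: ff1)
  have s11: "(\<Sum>r\<in>F3. if (\<lambda>(a,b,c). a = 0 \<and> c = 0 \<and> b \<noteq> 0) r then ff r else 0) = 4 * (p - 1)"
    by (rule sum_emb1[where e="\<lambda>x. (0,x,0)" and pr="\<lambda>(a,b,c). b"]) (auto simp: ff1)
  have s12: "(\<Sum>r\<in>F3. if (\<lambda>(a,b,c). b = 0 \<and> c = 0 \<and> a \<noteq> 0) r then ff r else 0) = 4 * (p - 1)"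
    by (rule sum_emb1[where e="\<lambda>x. (x,0,0)" and pr="\<lambda>(a,b,c). a"]) (auto simp: ff1)
  have s13: "(\<Sum>r\<in>F3. if (\<lambda>(a,b,c). a = b \<and> b = c \<and> a \<noteq> 0) r then ff r else 0) = 4 * (p - 1)"
    by (rule sum_emb1[where e="\<lambda>x. (x,x,x)" and pr="\<lambda>(a,b,c). a"]) (auto simp: ff1)
  have "(\<Sum>r\<in>F3. if PE r then ff r else 0) =
     (\<Sum>r\<in>F3. if (\<lambda>(a,b,c). a = 0 \<and> b \<noteq> 0 \<and> c \<noteq> 0 \<and> b \<noteq> c) r then ff r else 0) +
     (\<Sum>r\<in>F3. if (\<lambda>(a,b,c). b = 0 \<and> a \<noteq> 0 \<and> c \<noteq> 0 \<and> a \<noteq> c) r then ff r else 0) +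
     (\<Sum>r\<in>F3. if (\<lambda>(a,b,c). c = 0 \<and> a \<noteq> 0 \<and> b \<noteq> 0 \<and> a \<noteq> b) r then ff r else 0) +
     (\<Sum>r\<in>F3. if (\<lambda>(a,b,c). a = b \<and> a \<noteq> 0 \<and> c \<noteq> 0 \<and> a \<noteq> c) r then ff r else 0) +
     (\<Sum>r\<in>F3. if (\<lambda>(a,b,c). a = c \<and> a \<noteq> 0 \<and> b \<noteq> 0 \<and> a \<noteq> b) r then ff r else 0) +
     (\<Sum>r\<in>F3. if (\<lambda>(a,b,c). b = c \<and> a \<noteq> 0 \<and> b \<noteq> 0 \<and> a \<noteq> b) r then ff r else 0) +
     (\<Sum>r\<in>F3. if (\<lambda>(a,b,c). a = 0 \<and> b = c \<and> b \<noteq> 0) r then ff r else 0) +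
     (\<Sum>r\<in>F3. if (\<lambda>(a,b,c). b = 0 \<and> a = c \<and> a \<noteq> 0) r then ff r else 0) +
     (\<Sum>r\<in>F3. if (\<lambda>(a,b,c). c = 0 \<and> a = b \<and> a \<noteq> 0) r then ff r else 0) +
     (\<Sum>r\<in>F3. if (\<lambda>(a,b,c). a = 0 \<and> b = 0 \<and> c \<noteq> 0) r then ff r else 0) +
     (\<Sum>r\<in>F3. if (\<lambda>(a,b,c). a = 0 \<and> c = 0 \<and> b \<noteq> 0) r then ff r else 0) +
     (\<Sum>r\<in>F3. if (\<lambda>(a,b,c). b = 0 \<and> c = 0 \<and> a \<noteq> 0) r then ff r else 0) +
     (\<Sum>r\<in>F3. if (\<lambda>(a,b,c). a = b \<and> b = c \<and> a \<noteq> 0) r then ff r else 0)"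
    unfolding decomp[of _ "ff _"] by (simp only: sum.distrib)
  also have "\<dots> = (p - 1) * (24 * p - 80)"
    unfolding s1 s2 s3 s4 s5 s6 s7 s8 s9 s10 s11 s12 s13 by (simp add: algebra_simps)
  finally show ?thesis .
qed

end

context pp begin

definition PD :: "int \<times> int \<times> int \<Rightarrow> bool" where
  "PD r = (case r of (a,b,c) \<Rightarrow> a\<noteq>0 \<and> b\<noteq>0 \<and> c\<noteq>0 \<and> a\<noteq>b \<and> a\<noteq>c \<and> b\<noteq>c)"

definition allQR :: "int \<times> int \<times> int \<Rightarrow> bool" where
  "allQR r = (case r of (a,b,c) \<Rightarrow> QuadRes p a \<and> QuadRes p b \<and> QuadRes p c \<and>
      QuadRes p (b - a) \<and> QuadRes p (c - a) \<and> QuadRes p (c - b))"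

definition Tset :: "(int \<times> int \<times> int) set" where
  "Tset = {r \<in> F3. PD r \<and> allQR r}"

lemma diffF0: "a \<in> {0..<p} \<Longrightarrow> c \<in> {0..<p} \<Longrightarrow> (c - a) mod p = 0 \<longleftrightarrow> c = a"
proof -
  assume F: "a \<in> {0..<p}" "c \<in> {0..<p}"
  have "(c - a) mod p = 0 \<longleftrightarrow> p dvd c - a" by (simp add: dvd_eq_mod_eq_0)
  also have "\<dots> \<longleftrightarrow> c mod p = a mod p" by (simp add: mod_eq_dvd_iff)
  also have "\<dots> \<longleftrightarrow> c = a" using F by simp
  finally show ?thesis .
qed

lemma ff_PD: assumes r: "r \<in> F3" "PD r" shows "ff r = (if allQR r then 64 else 0)"
proof -
  obtain a b c where rr: "r = (a,b,c)" by (cases r) auto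
  have F: "a \<in> {0..<p}" "b \<in> {0..<p}" "c \<in> {0..<p}" using r rr by auto
  have nz: "a mod p \<noteq> 0" "b mod p \<noteq> 0" "c mod p \<noteq> 0" "(b - a) mod p \<noteq> 0" "(c - a) mod p \<noteq> 0"
     "(c - b) mod p \<noteq> 0" using r rr F diffF0[of a b] diffF0[of a c] diffF0[of b c]
    unfolding PD_def by auto
  show ?thesis unfolding rr ff_def allQR_def using nz by (simp add: ns_nz)
qed

lemma PD_sum: "(\<Sum>r\<in>{r\<in>F3. PD r}. ff r) = 64 * int (card Tset)"
proof -
  have "(\<Sum>r\<in>{r\<in>F3. PD r}. ff r) = (\<Sum>r\<in>{r\<in>F3. PD r}. if allQR r then 64 else 0)"
    by (rule sum.cong) (auto simp: ff_PD)
  also have "\<dots> = (\<Sum>r\<in>{r\<in>{r\<in>F3. PD r}. allQR r}. 64)"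
    by (rule sum.inter_filter[symmetric]) simp
  also have "{r\<in>{r\<in>F3. PD r}. allQR r} = Tset" unfolding Tset_def by auto
  finally show ?thesis by simp
qed

lemma sq_zero: "y \<in> sq d \<Longrightarrow> (y = 0 \<longleftrightarrow> d mod p = 0)"
  unfolding sq_def using F_sq0 by auto

lemma coord_zero: assumes xA: "x \<in> AA" and ph: "phi x = (a,b,c)"
  shows "(x!0 = 0 \<longleftrightarrow> c = 0)" "(x!1 = 0 \<longleftrightarrow> c = a)" "(x!2 = 0 \<longleftrightarrow> c = b)"
    "(x!3 = 0 \<longleftrightarrow> b = a)" "(x!4 = 0 \<longleftrightarrow> a = 0)" "(x!5 = 0 \<longleftrightarrow> b = 0)"
proof -
  have F: "a \<in> {0..<p}" "b \<in> {0..<p}" "c \<in> {0..<p}" using phi_F[OF xA] ph by auto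
  obtain y where y: "y \<in> sq c \<times> sq (c-a) \<times> sq (c-b) \<times> sq (b-a) \<times> sq a \<times> sq b" and x: "x = LL y"
    using fiber1[OF F xA ph] by blast
  obtain y0 y1 y2 y3 y4 y5 where yy: "y = (y0,y1,y2,y3,y4,y5)" by (cases y) auto
  have x': "x = [y0,y1,y2,y3,y4,y5]" using x yy unfolding LL_def by simp
  have ys: "y0 \<in> sq c" "y1 \<in> sq (c-a)" "y2 \<in> sq (c-b)" "y3 \<in> sq (b-a)" "y4 \<in> sq a" "y5 \<in> sq b"
    using y yy by auto
  show "(x!0 = 0 \<longleftrightarrow> c = 0)" "(x!1 = 0 \<longleftrightarrow> c = a)" "(x!2 = 0 \<longleftrightarrow> c = b)"
    "(x!3 = 0 \<longleftrightarrow> b = a)" "(x!4 = 0 \<longleftrightarrow> a = 0)" "(x!5 = 0 \<longleftrightarrow> b = 0)"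
    unfolding x' using sq_zero[OF ys(1)] sq_zero[OF ys(2)] sq_zero[OF ys(3)] sq_zero[OF ys(4)]
      sq_zero[OF ys(5)] sq_zero[OF ys(6)] diffF0 F by auto
qed

lemma len_AA: "x \<in> AA \<Longrightarrow> length x = 6" unfolding AA_def Fp_vecs_def by auto

lemma A0_iff: assumes xA: "x \<in> AA" shows "(\<forall>i<6. x!i \<noteq> 0) \<longleftrightarrow> phi x \<in> {r\<in>F3. PD r}"
proof -
  obtain a b c where ph: "phi x = (a,b,c)" by (cases "phi x") auto
  show ?thesis
    unfolding all6 using coord_zero[OF xA ph] phi_F[OF xA] ph unfolding PD_def by auto
qed

lemma A0_eq: "{x \<in> AA. \<forall>i<6. x!i \<noteq> 0} = {x \<in> AA. phi x \<in> {r\<in>F3. PD r}}"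
proof (rule Collect_cong)
  fix x show "(x \<in> AA \<and> (\<forall>i<6. x!i \<noteq> 0)) = (x \<in> AA \<and> phi x \<in> {r\<in>F3. PD r})"
  proof (cases "x \<in> AA")
    case True then show ?thesis using A0_iff[OF True] by simp
  qed simp
qed

lemma zero_eq: assumes xA: "x \<in> AA" shows "x = replicate 6 0 \<longleftrightarrow> phi x = (0,0,0)"
proof -
  obtain a b c where ph: "phi x = (a,b,c)" by (cases "phi x") auto
  have r6: "replicate 6 (0::int) = [0,0,0,0,0,0]" by (simp add: numeral_eq_Suc)
  have "x = replicate 6 0 \<longleftrightarrow> x!0 = 0 \<and> x!1 = 0 \<and> x!2 = 0 \<and> x!3 = 0 \<and> x!4 = 0 \<and> x!5 = 0"
  proof
    assume "x = replicate 6 0" then show "x!0 = 0 \<and> x!1 = 0 \<and> x!2 = 0 \<and> x!3 = 0 \<and> x!4 = 0 \<and> x!5 = 0"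
      by (simp add: r6)
  next
    assume "x!0 = 0 \<and> x!1 = 0 \<and> x!2 = 0 \<and> x!3 = 0 \<and> x!4 = 0 \<and> x!5 = 0"
    then show "x = replicate 6 0" using vec6[OF len_AA[OF xA]] r6 by simp
  qed
  then show ?thesis using coord_zero[OF xA ph] ph by auto
qed

lemma A1_eq: "{x \<in> AA. x \<noteq> replicate 6 0} - {x \<in> AA. \<forall>i<6. x!i \<noteq> 0} = {x \<in> AA. phi x \<in> {r\<in>F3. PE r}}"
proof (intro subset_antisym subsetI)
  fix x assume "x \<in> {x \<in> AA. x \<noteq> replicate 6 0} - {x \<in> AA. \<forall>i<6. x!i \<noteq> 0}"
  then have xA: "x \<in> AA" and n0: "x \<noteq> replicate 6 0" and "x \<notin> {x \<in> AA. \<forall>i<6. x!i \<noteq> 0}" by auto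
  then have "\<not> (phi x \<in> {r\<in>F3. PD r})" using A0_iff[OF xA] by simp
  moreover have "phi x \<noteq> (0,0,0)" using zero_eq[OF xA] n0 by simp
  moreover obtain a b c where ph: "phi x = (a,b,c)" by (cases "phi x") auto
  ultimately show "x \<in> {x \<in> AA. phi x \<in> {r\<in>F3. PE r}}" using xA phi_F[OF xA]
    unfolding PD_def PE_def by auto
next
  fix x assume "x \<in> {x \<in> AA. phi x \<in> {r\<in>F3. PE r}}"
  then have xA: "x \<in> AA" and pe: "phi x \<in> {r\<in>F3. PE r}" by auto
  obtain a b c where ph: "phi x = (a,b,c)" by (cases "phi x") auto
  have "phi x \<noteq> (0,0,0)" "phi x \<notin> {r\<in>F3. PD r}" using pe ph unfolding PD_def PE_def by auto
  then show "x \<in> {x \<in> AA. x \<noteq> replicate 6 0} - {x \<in> AA. \<forall>i<6. x!i \<noteq> 0}"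
    using xA zero_eq[OF xA] A0_iff[OF xA] by simp
qed

lemma card_A0: "int (card {x \<in> AA. \<forall>i<6. x!i \<noteq> 0}) = 64 * int (card Tset)"
  unfolding A0_eq by (subst card_R) (auto simp: PD_sum)

lemma card_A1: "int (card ({x \<in> AA. x \<noteq> replicate 6 0} - {x \<in> AA. \<forall>i<6. x!i \<noteq> 0})) = (p - 1) * (24 * p - 80)"
proof -
  have "int (card {x \<in> AA. phi x \<in> {r\<in>F3. PE r}}) = (\<Sum>r\<in>{r\<in>F3. PE r}. ff r)"
    by (rule card_R) auto
  also have "\<dots> = (\<Sum>r\<in>F3. if PE r then ff r else 0)" by (rule sum.inter_filter) simp
  finally show ?thesis unfolding A1_eq E_sum .
qed

end

context pp begin

definition sc :: "int \<Rightarrow> int list \<Rightarrow> int list" where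
  "sc c x = map (\<lambda>a. (c * a) mod p) x"

lemma proj_sc: "proj_pt p x = {sc c x | c. c \<in> {1..<p}}"
  unfolding proj_pt_def sc_def by simp

lemma sc_nth: "i < length x \<Longrightarrow> (sc c x)!i = (c * x!i) mod p"
  unfolding sc_def by simp

lemma sc_len [simp]: "length (sc c x) = length x" unfolding sc_def by simp

lemma sc_Fp: "x \<in> Fp_vecs p \<Longrightarrow> sc c x \<in> Fp_vecs p"
  unfolding Fp_vecs_def sc_def using p_gt by auto

lemma sc_1: "x \<in> Fp_vecs p \<Longrightarrow> sc 1 x = x"
  unfolding Fp_vecs_def sc_def by (auto intro!: map_idI)

lemma sc_mod: "sc (c mod p) x = sc c x"
  unfolding sc_def by (simp add: mod_mult_left_eq)

lemma sc_sc: "sc c (sc d x) = sc (c * d) x"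
  unfolding sc_def by (simp add: mod_mult_right_eq mult.assoc)

lemma units_mult: "c \<in> {1..<p} \<Longrightarrow> d \<in> {1..<p} \<Longrightarrow> (c * d) mod p \<in> {1..<p}"
proof -
  assume cd: "c \<in> {1..<p}" "d \<in> {1..<p}"
  have "\<not> p dvd c" "\<not> p dvd d" using cd by (auto simp: zdvd_not_zless)
  then have "\<not> p dvd c * d" using prime_dvd_mult_iff[OF prime_p] by blast
  then have "(c * d) mod p \<noteq> 0" by (simp add: dvd_eq_mod_eq_0)
  moreover have "(c * d) mod p \<ge> 0" "(c * d) mod p < p" using p_gt by auto
  ultimately show ?thesis by auto
qed

lemma unit_inv: "c \<in> {1..<p} \<Longrightarrow> \<exists>c'\<in>{1..<p}. (c' * c) mod p = 1"
proof -
  assume c: "c \<in> {1..<p}"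
  obtain x where x: "(c * x) mod p = 1" using inv_ex[OF c] by blast
  have "x mod p \<in> {1..<p}"
  proof -
    have "x mod p \<noteq> 0" using x p_gt by (metis mod_mult_right_eq mult_zero_right zero_neq_one mod_0)
    moreover have "x mod p \<ge> 0" "x mod p < p" using p_gt by auto
    ultimately show ?thesis by auto
  qed
  moreover have "((x mod p) * c) mod p = 1" using x by (simp add: mod_mult_left_eq mod_mult_right_eq mult.commute)
  ultimately show ?thesis by blast
qed

lemma sq_sc: "(((c * a) mod p)^2) mod p = (c^2 * a^2) mod p"
  by (simp add: power_mod power_mult_distrib)

lemma dvd_sc: "p dvd ((c * a) mod p)^2 - c^2 * a^2"
  using sq_sc[of c a] by (simp add: mod_eq_dvd_iff)

lemma dvd4: "p dvd u \<Longrightarrow> p dvd v \<Longrightarrow> p dvd w \<Longrightarrow> p dvd t \<Longrightarrow> z = u - v - w + t \<Longrightarrow> p dvd z"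
  by (simp add: dvd_diff dvd_add)

lemma sc_on_S: assumes "on_S p x" "length x = 6" shows "on_S p (sc c x)"
proof -
  have s: "p dvd (x!1)^2 - (x!2)^2 - (x!3)^2" "p dvd (x!0)^2 - (x!1)^2 - (x!4)^2"
    "p dvd (x!0)^2 - (x!2)^2 - (x!5)^2" using assms(1) on_S_dvd by auto
  have n: "(sc c x)!i = (c * x!i) mod p" if "i < 6" for i using sc_nth assms(2) that by simp
  have t1: "p dvd c^2 * ((x!1)^2 - (x!2)^2 - (x!3)^2)" using s(1) by simp
  have t2: "p dvd c^2 * ((x!0)^2 - (x!1)^2 - (x!4)^2)" using s(2) by simp
  have t3: "p dvd c^2 * ((x!0)^2 - (x!2)^2 - (x!5)^2)" using s(3) by simp
  have n0: "(sc c x)!0 = (c * x!0) mod p" and n1: "(sc c x)!1 = (c * x!1) mod p"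
    and n2: "(sc c x)!2 = (c * x!2) mod p" and n3: "(sc c x)!3 = (c * x!3) mod p"
    and n4: "(sc c x)!4 = (c * x!4) mod p" and n5: "(sc c x)!5 = (c * x!5) mod p" using n by auto
  have u1: "p dvd ((c * x!1) mod p)^2 - ((c * x!2) mod p)^2 - ((c * x!3) mod p)^2"
    by (rule dvd4[OF dvd_sc[of c "x!1"] dvd_sc[of c "x!2"] dvd_sc[of c "x!3"] t1]) (simp add: algebra_simps)
  have u2: "p dvd ((c * x!0) mod p)^2 - ((c * x!1) mod p)^2 - ((c * x!4) mod p)^2"
    by (rule dvd4[OF dvd_sc[of c "x!0"] dvd_sc[of c "x!1"] dvd_sc[of c "x!4"] t2]) (simp add: algebra_simps)
  have u3: "p dvd ((c * x!0) mod p)^2 - ((c * x!2) mod p)^2 - ((c * x!5) mod p)^2"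
    by (rule dvd4[OF dvd_sc[of c "x!0"] dvd_sc[of c "x!2"] dvd_sc[of c "x!5"] t3]) (simp add: algebra_simps)
  show ?thesis unfolding on_S_dvd n0 n1 n2 n3 n4 n5 using u1 u2 u3 by blast
qed

lemma sc_zero_iff: assumes "c \<in> {1..<p}" "a \<in> {0..<p}" shows "(c * a) mod p = 0 \<longleftrightarrow> a = 0"
proof -
  have "\<not> p dvd c" using assms by (auto simp: zdvd_not_zless)
  then have "(c * a) mod p = 0 \<longleftrightarrow> p dvd a" using prime_dvd_mult_iff[OF prime_p]
    by (auto simp: dvd_eq_mod_eq_0[symmetric])
  then show ?thesis using F_dvd assms by simp
qed

end

context pp begin

lemma proj_self: assumes "x \<in> Fp_vecs p" shows "x \<in> proj_pt p x"
proof -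
  have "x = sc 1 x" using sc_1[OF assms] by simp
  moreover have "(1::int) \<in> {1..<p}" using p_gt by simp
  ultimately show ?thesis unfolding proj_sc by blast
qed

lemma proj_eq: assumes x: "x \<in> Fp_vecs p" and y: "y \<in> proj_pt p x" shows "proj_pt p y = proj_pt p x"
proof -
  obtain c where c: "c \<in> {1..<p}" and yc: "y = sc c x" using y unfolding proj_sc by auto
  obtain c' where c': "c' \<in> {1..<p}" and cc: "(c' * c) mod p = 1" using unit_inv[OF c] by blast
  show ?thesis
  proof (intro subset_antisym subsetI)
    fix z assume "z \<in> proj_pt p y"
    then obtain d where d: "d \<in> {1..<p}" and z: "z = sc d y" unfolding proj_sc by auto
    have "z = sc ((d * c) mod p) x" unfolding z yc sc_sc sc_mod ..
    moreover have "(d * c) mod p \<in> {1..<p}" using units_mult[OF d c] .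
    ultimately show "z \<in> proj_pt p x" unfolding proj_sc by blast
  next
    fix z assume "z \<in> proj_pt p x"
    then obtain e where e: "e \<in> {1..<p}" and z: "z = sc e x" unfolding proj_sc by auto
    have "sc ((e * c') mod p) y = sc (((e * c') mod p) * c) x" unfolding yc sc_sc ..
    also have "\<dots> = sc ((((e * c') mod p) * c) mod p) x" by (rule sc_mod[symmetric])
    also have "(((e * c') mod p) * c) mod p = (e * ((c' * c) mod p)) mod p"
      by (simp add: mod_mult_left_eq mod_mult_right_eq mult.assoc)
    also have "\<dots> = e mod p" using cc by simp
    also have "sc (e mod p) x = z" unfolding z sc_mod ..
    finally have "z = sc ((e * c') mod p) y" by simp
    moreover have "(e * c') mod p \<in> {1..<p}" using units_mult[OF e c'] .
    ultimately show "z \<in> proj_pt p y" unfolding proj_sc by blast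
  qed
qed

lemma nz_coord: "length x = 6 \<Longrightarrow> x \<noteq> replicate 6 0 \<Longrightarrow> \<exists>i<6. x!i \<noteq> (0::int)"
proof (rule ccontr)
  assume "length x = 6" "x \<noteq> replicate 6 0" "\<not> (\<exists>i<6. x!i \<noteq> (0::int))"
  then show False by (auto simp: list_eq_iff_nth_eq)
qed

lemma card_proj: assumes x: "x \<in> Fp_vecs p" "x \<noteq> replicate 6 0"
  shows "int (card (proj_pt p x)) = p - 1"
proof -
  have len: "length x = 6" and sx: "set x \<subseteq> {0..<p}" using x unfolding Fp_vecs_def by auto
  obtain i where i: "i < 6" "x!i \<noteq> 0" using nz_coord[OF len x(2)] by blast
  have xi: "x!i \<in> {0..<p}" using t2[OF sx] len i by auto
  have ndvd: "\<not> p dvd x!i" using F_dvd[OF xi] i by simp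
  have pe: "proj_pt p x = (\<lambda>c. sc c x) ` {1..<p}" unfolding proj_sc by auto
  have "inj_on (\<lambda>c. sc c x) {1..<p}"
  proof (rule inj_onI)
    fix c d assume c: "c \<in> {1..<p}" and d: "d \<in> {1..<p}" and e: "sc c x = sc d x"
    have "(sc c x)!i = (sc d x)!i" using e by simp
    then have "(c * x!i) mod p = (d * x!i) mod p" using sc_nth len i by simp
    then have "p dvd (c - d) * x!i" by (simp add: mod_eq_dvd_iff algebra_simps)
    then have "p dvd c - d" using ndvd prime_dvd_mult_iff[OF prime_p] by blast
    then have "c mod p = d mod p" by (simp add: mod_eq_dvd_iff)
    then show "c = d" using c d by simp
  qed
  then have "card (proj_pt p x) = card {1..<p}" unfolding pe by (rule card_image)
  then show ?thesis using p_gt by simp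
qed

lemma orbit_count:
  assumes X: "X \<subseteq> Fp_vecs p" and nz: "\<And>x. x \<in> X \<Longrightarrow> x \<noteq> replicate 6 0"
    and cl: "\<And>x c. x \<in> X \<Longrightarrow> c \<in> {1..<p} \<Longrightarrow> sc c x \<in> X"
  shows "int (card X) = (p - 1) * int (card (proj_pt p ` X))"
proof -
  have fX: "finite X" using finite_subset[OF X finite_Fp] .
  have "card X = (\<Sum>P\<in>proj_pt p ` X. card {x\<in>X. proj_pt p x = P})"
    by (rule card_group) (use fX in auto)
  then have "int (card X) = (\<Sum>P\<in>proj_pt p ` X. int (card {x\<in>X. proj_pt p x = P}))" by simp
  also have "\<dots> = (\<Sum>P\<in>proj_pt p ` X. p - 1)"
  proof (rule sum.cong)
    fix P assume "P \<in> proj_pt p ` X"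
    then obtain y where y: "y \<in> X" and P: "P = proj_pt p y" by blast
    have yF: "y \<in> Fp_vecs p" using X y by blast
    have "{x\<in>X. proj_pt p x = P} = proj_pt p y"
    proof (intro subset_antisym subsetI)
      fix x assume "x \<in> {x\<in>X. proj_pt p x = P}"
      then have "x \<in> X" "proj_pt p x = proj_pt p y" using P by auto
      then show "x \<in> proj_pt p y" using proj_self X by blast
    next
      fix z assume z: "z \<in> proj_pt p y"
      then obtain c where c: "c \<in> {1..<p}" and zc: "z = sc c y" unfolding proj_sc by auto
      have "z \<in> X" using cl[OF y c] zc by simp
      moreover have "proj_pt p z = proj_pt p y" using proj_eq[OF yF z] .
      ultimately show "z \<in> {x\<in>X. proj_pt p x = P}" using P by simp
    qed
    then show "int (card {x\<in>X. proj_pt p x = P}) = p - 1" using card_proj[OF yF nz[OF y]] by simp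
  qed simp
  finally show ?thesis by simp
qed

lemma sc_AA: "x \<in> AA \<Longrightarrow> sc c x \<in> AA"
  unfolding AA_def using sc_Fp sc_on_S len_AA[unfolded AA_def] by auto

lemma card_S: "int (card {x \<in> AA. x \<noteq> replicate 6 0}) = (p - 1) * int (card (S_pts p))"
proof -
  have e: "S_pts p = proj_pt p ` {x \<in> AA. x \<noteq> replicate 6 0}"
    unfolding S_pts_def AA_def by blast
  show ?thesis unfolding e
  proof (rule orbit_count)
    show "{x \<in> AA. x \<noteq> replicate 6 0} \<subseteq> Fp_vecs p" unfolding AA_def by auto
  next
    fix x c assume x: "x \<in> {x \<in> AA. x \<noteq> replicate 6 0}" and c: "c \<in> {1..<p}"
    have len: "length x = 6" using x len_AA by auto
    have sx: "set x \<subseteq> {0..<p}" using x unfolding AA_def Fp_vecs_def by auto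
    obtain i where i: "i < 6" "x!i \<noteq> 0" using nz_coord[OF len] x by auto
    have xi: "x!i \<in> {0..<p}" using t2[OF sx] len i by auto
    have "(sc c x)!i \<noteq> 0" using sc_nth[of i x c] len i sc_zero_iff[OF c xi] by simp
    then have "sc c x \<noteq> replicate 6 0" using i by auto
    then show "sc c x \<in> {x \<in> AA. x \<noteq> replicate 6 0}" using sc_AA x by auto
  qed auto
qed

lemma card_S0: "int (card {x \<in> AA. \<forall>i<6. x!i \<noteq> 0}) = (p - 1) * int (card (S0_pts p))"
proof -
  have e: "S0_pts p = proj_pt p ` {x \<in> AA. \<forall>i<6. x!i \<noteq> 0}"
    unfolding S0_pts_def AA_def by blast
  show ?thesis unfolding e
  proof (rule orbit_count)
    show "{x \<in> AA. \<forall>i<6. x!i \<noteq> 0} \<subseteq> Fp_vecs p" unfolding AA_def by auto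
  next
    fix x assume "x \<in> {x \<in> AA. \<forall>i<6. x!i \<noteq> 0}"
    then have "x!0 \<noteq> 0" by auto
    then show "x \<noteq> replicate 6 0" by auto
  next
    fix x c assume x: "x \<in> {x \<in> AA. \<forall>i<6. x!i \<noteq> 0}" and c: "c \<in> {1..<p}"
    have len: "length x = 6" using x len_AA by auto
    have sx: "set x \<subseteq> {0..<p}" using x unfolding AA_def Fp_vecs_def by auto
    have "(sc c x)!i \<noteq> 0" if i: "i < 6" for i
    proof -
      have xi: "x!i \<in> {0..<p}" using t2[OF sx] len i by auto
      show ?thesis using sc_nth[of i x c] len i sc_zero_iff[OF c xi] x by simp
    qed
    then show "sc c x \<in> {x \<in> AA. \<forall>i<6. x!i \<noteq> 0}" using sc_AA x by auto
  qed
qed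

end

context pp begin

definition tr :: "int set \<Rightarrow> int \<Rightarrow> int set" where
  "tr A t = (\<lambda>a. (a + t) mod p) ` A"

lemma tc_tr: "transl_class p A = {tr A t | t. t \<in> {0..<p}}"
  unfolding transl_class_def tr_def by simp

lemma tr_0: "A \<subseteq> {0..<p} \<Longrightarrow> tr A 0 = A"
  unfolding tr_def by (auto simp: subset_iff image_iff)

lemma tr_tr: "tr (tr A s) t = tr A ((s + t) mod p)"
  unfolding tr_def image_image by (simp add: mod_simps add.assoc)

lemma inj_tr: "A \<subseteq> {0..<p} \<Longrightarrow> inj_on (\<lambda>a. (a + t) mod p) A"
proof (rule inj_onI)
  fix a b assume A: "A \<subseteq> {0..<p}" "a \<in> A" "b \<in> A" "(a + t) mod p = (b + t) mod p"
  then have "p dvd (a + t) - (b + t)" by (simp add: mod_eq_dvd_iff)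
  then have "a mod p = b mod p" by (simp add: mod_eq_dvd_iff)
  then show "a = b" using A by (metis F_eq subsetD)
qed

lemma tr_K4: assumes A: "A \<in> K4_sets p" shows "tr A t \<in> K4_sets p"
proof -
  have AF: "A \<subseteq> {0..<p}" and c4: "card A = 4"
    and Q: "\<forall>a\<in>A. \<forall>b\<in>A. a \<noteq> b \<longrightarrow> QuadRes p (a - b)" using A unfolding K4_sets_def by auto
  have "tr A t \<subseteq> {0..<p}" unfolding tr_def using p_gt by auto
  moreover have "card (tr A t) = 4" unfolding tr_def using card_image[OF inj_tr[OF AF]] c4 by simp
  moreover have "\<forall>u\<in>tr A t. \<forall>v\<in>tr A t. u \<noteq> v \<longrightarrow> QuadRes p (u - v)"
  proof (intro ballI impI)
    fix u v assume u: "u \<in> tr A t" and v: "v \<in> tr A t" and uv: "u \<noteq> v"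
    obtain a where a: "a \<in> A" "u = (a + t) mod p" using u unfolding tr_def by auto
    obtain b where b: "b \<in> A" "v = (b + t) mod p" using v unfolding tr_def by auto
    have "a \<noteq> b" using a b uv by auto
    then have "QuadRes p (a - b)" using Q a b by auto
    moreover have "(u - v) mod p = (a - b) mod p" unfolding a b by (simp add: mod_simps)
    ultimately show "QuadRes p (u - v)" using QR_cong by metis
  qed
  ultimately show ?thesis unfolding K4_sets_def by auto
qed

lemma tc_eq: assumes B: "B \<subseteq> {0..<p}" and A: "A \<in> transl_class p B"
  shows "transl_class p A = transl_class p B"
proof -
  obtain s where s: "s \<in> {0..<p}" and As: "A = tr B s" using A unfolding tc_tr by auto
  show ?thesis
  proof (intro subset_antisym subsetI)
    fix C assume "C \<in> transl_class p A"
    then obtain t where "t \<in> {0..<p}" "C = tr A t" unfolding tc_tr by auto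
    then have "C = tr B ((s + t) mod p)" using As tr_tr by simp
    moreover have "(s + t) mod p \<in> {0..<p}" using p_gt by simp
    ultimately show "C \<in> transl_class p B" unfolding tc_tr by blast
  next
    fix C assume "C \<in> transl_class p B"
    then obtain u where u: "u \<in> {0..<p}" "C = tr B u" unfolding tc_tr by auto
    define t where "t = (u - s) mod p"
    have "(s + t) mod p = u" unfolding t_def using u by (simp add: mod_simps)
    then have "C = tr A t" using As tr_tr u by simp
    moreover have "t \<in> {0..<p}" unfolding t_def using p_gt by simp
    ultimately show "C \<in> transl_class p A" unfolding tc_tr by blast
  qed
qed

lemma sum_tr: assumes B: "B \<subseteq> {0..<p}" "card B = 4"
  shows "(\<Sum>x\<in>tr B s. x) mod p = ((\<Sum>a\<in>B. a) + 4 * s) mod p"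
proof -
  have "(\<Sum>x\<in>tr B s. x) = (\<Sum>a\<in>B. (a + s) mod p)"
    unfolding tr_def by (simp add: sum.reindex[OF inj_tr[OF B(1)]])
  then have "(\<Sum>x\<in>tr B s. x) mod p = (\<Sum>a\<in>B. (a + s)) mod p" by (simp add: mod_sum_eq)
  also have "(\<Sum>a\<in>B. (a + s)) = (\<Sum>a\<in>B. a) + 4 * s" using B(2) by (simp add: sum.distrib)
  finally show ?thesis .
qed

lemma tr_inj: assumes B: "B \<subseteq> {0..<p}" "card B = 4" and st: "s \<in> {0..<p}" "t \<in> {0..<p}"
  and e: "tr B s = tr B t" shows "s = t"
proof -
  have "((\<Sum>a\<in>B. a) + 4 * s) mod p = ((\<Sum>a\<in>B. a) + 4 * t) mod p"
    using sum_tr[OF B, of s] sum_tr[OF B, of t] e by simp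
  then have "p dvd ((\<Sum>a\<in>B. a) + 4 * s) - ((\<Sum>a\<in>B. a) + 4 * t)" by (simp add: mod_eq_dvd_iff)
  then have "p dvd 2 * (2 * (s - t))" by (simp add: algebra_simps)
  then have "p dvd s - t" using dvd2 by blast
  then have "s mod p = t mod p" by (simp add: mod_eq_dvd_iff)
  then show ?thesis using st by simp
qed

definition K0 :: "int set set" where "K0 = {A \<in> K4_sets p. 0 \<in> A}"

lemma fiber_K0: assumes B: "B \<in> K4_sets p"
  shows "{A \<in> K0. A \<in> transl_class p B} = (\<lambda>a. tr B ((- a) mod p)) ` B"
proof (intro subset_antisym subsetI)
  have BF: "B \<subseteq> {0..<p}" using B unfolding K4_sets_def by auto
  fix A assume "A \<in> {A \<in> K0. A \<in> transl_class p B}"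
  then have A0: "0 \<in> A" and At: "A \<in> transl_class p B" unfolding K0_def by auto
  obtain t where t: "t \<in> {0..<p}" and At': "A = tr B t" using At unfolding tc_tr by auto
  obtain a where a: "a \<in> B" "(a + t) mod p = 0" using A0 At' unfolding tr_def by auto
  have "t mod p = (- a) mod p"
  proof -
    have "p dvd a + t" using a by (simp add: dvd_eq_mod_eq_0)
    then show ?thesis by (simp add: mod_eq_dvd_iff add.commute)
  qed
  then have "t = (- a) mod p" using t by simp
  then show "A \<in> (\<lambda>a. tr B ((- a) mod p)) ` B" using At' a by blast
next
  fix A assume "A \<in> (\<lambda>a. tr B ((- a) mod p)) ` B"
  then obtain a where a: "a \<in> B" and Aa: "A = tr B ((- a) mod p)" by auto
  have "A \<in> K4_sets p" unfolding Aa by (rule tr_K4[OF B])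
  moreover have "0 \<in> A"
  proof -
    have "(a + (- a) mod p) mod p = 0" by (simp add: mod_simps)
    then show ?thesis unfolding Aa tr_def using a by force
  qed
  moreover have "A \<in> transl_class p B" unfolding tc_tr Aa using p_gt by auto
  ultimately show "A \<in> {A \<in> K0. A \<in> transl_class p B}" unfolding K0_def by auto
qed

lemma card_fiber_K0: assumes B: "B \<in> K4_sets p" shows "card {A \<in> K0. A \<in> transl_class p B} = 4"
proof -
  have BF: "B \<subseteq> {0..<p}" and c4: "card B = 4" using B unfolding K4_sets_def by auto
  have "inj_on (\<lambda>a. tr B ((- a) mod p)) B"
  proof (rule inj_onI)
    fix a b assume ab: "a \<in> B" "b \<in> B" "tr B ((- a) mod p) = tr B ((- b) mod p)"
    have "(- a) mod p = (- b) mod p" by (rule tr_inj[OF BF c4 _ _ ab(3)]) (use p_gt in auto)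
    then have "p dvd b - a" by (simp add: mod_eq_dvd_iff)
    then have "a mod p = b mod p" by (simp add: mod_eq_dvd_iff dvd_diff_commute)
    then show "a = b" using ab BF by (metis F_eq subsetD)
  qed
  then show ?thesis unfolding fiber_K0[OF B] using card_image c4 by metis
qed

lemma finite_K4: "finite (K4_sets p)"
  by (rule finite_subset[of _ "Pow {0..<p}"]) (auto simp: K4_sets_def)

lemma card_K0: "card K0 = 4 * n_K4 p"
proof -
  have nk: "n_K4 p = card (transl_class p ` K4_sets p)" unfolding n_K4_def
    by (simp add: setcompr_eq_image)
  have fK0: "finite K0" using finite_K4 unfolding K0_def by simp
  have "card K0 = (\<Sum>C\<in>transl_class p ` K4_sets p. card {A\<in>K0. transl_class p A = C})"
    by (rule card_group) (use fK0 finite_K4 in \<open>auto simp: K0_def\<close>)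
  also have "\<dots> = (\<Sum>C\<in>transl_class p ` K4_sets p. 4)"
  proof (rule sum.cong)
    fix C assume "C \<in> transl_class p ` K4_sets p"
    then obtain B where B: "B \<in> K4_sets p" and C: "C = transl_class p B" by blast
    have BF: "B \<subseteq> {0..<p}" using B unfolding K4_sets_def by auto
    have "{A\<in>K0. transl_class p A = C} = {A \<in> K0. A \<in> transl_class p B}"
    proof (intro Collect_cong conj_cong refl)
      fix A assume A: "A \<in> K0"
      then have AF: "A \<subseteq> {0..<p}" unfolding K0_def K4_sets_def by auto
      have Aself: "A \<in> transl_class p A" unfolding tc_tr using tr_0[OF AF] p_gt by force
      show "(transl_class p A = C) = (A \<in> transl_class p B)"
        using tc_eq[OF BF] Aself C by auto
    qed
    then show "card {A\<in>K0. transl_class p A = C} = 4" using card_fiber_K0[OF B] by simp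
  qed simp
  finally show ?thesis using nk by simp
qed

end

context pp begin

definition set3 :: "int \<times> int \<times> int \<Rightarrow> int set" where
  "set3 r = (case r of (a,b,c) \<Rightarrow> {0,a,b,c})"

lemma T_K0: assumes r: "r \<in> Tset" shows "set3 r \<in> K0"
proof -
  obtain a b c where rr: "r = (a,b,c)" by (cases r) auto
  have F: "a \<in> {0..<p}" "b \<in> {0..<p}" "c \<in> {0..<p}" and pd: "PD (a,b,c)" and q: "allQR (a,b,c)"
    using r rr unfolding Tset_def by auto
  have d: "a \<noteq> 0" "b \<noteq> 0" "c \<noteq> 0" "a \<noteq> b" "a \<noteq> c" "b \<noteq> c" using pd unfolding PD_def by auto
  have Q: "QuadRes p a" "QuadRes p b" "QuadRes p c" "QuadRes p (b - a)" "QuadRes p (c - a)" "QuadRes p (c - b)"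
    using q unfolding allQR_def by auto
  have Qn: "QuadRes p (- a)" "QuadRes p (- b)" "QuadRes p (- c)" "QuadRes p (a - b)" "QuadRes p (a - c)" "QuadRes p (b - c)"
    using Q QR_neg[of a] QR_neg[of b] QR_neg[of c] QR_neg[of "b - a"] QR_neg[of "c - a"] QR_neg[of "c - b"]
    by auto
  have "{0,a,b,c} \<subseteq> {0..<p}" using F p_gt by auto
  moreover have "card {0,a,b,c} = 4" using d by simp
  moreover have "\<forall>u\<in>{0,a,b,c}. \<forall>v\<in>{0,a,b,c}. u \<noteq> v \<longrightarrow> QuadRes p (u - v)"
    using Q Qn by auto
  ultimately show ?thesis unfolding K0_def K4_sets_def set3_def rr by auto
qed

lemma K0_T: assumes A: "A \<in> K0" and abc: "a \<in> A" "b \<in> A" "c \<in> A" "a \<noteq> 0" "b \<noteq> 0" "c \<noteq> 0"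
    "a \<noteq> b" "a \<noteq> c" "b \<noteq> c"
  shows "(a,b,c) \<in> Tset"
proof -
  have AF: "A \<subseteq> {0..<p}" and A0: "0 \<in> A"
    and Q: "\<forall>u\<in>A. \<forall>v\<in>A. u \<noteq> v \<longrightarrow> QuadRes p (u - v)" using A unfolding K0_def K4_sets_def by auto
  have Q': "\<And>u v. u \<in> A \<Longrightarrow> v \<in> A \<Longrightarrow> u \<noteq> v \<Longrightarrow> QuadRes p (u - v)" using Q by blast
  have "QuadRes p (a - 0)" "QuadRes p (b - 0)" "QuadRes p (c - 0)" "QuadRes p (b - a)"
     "QuadRes p (c - a)" "QuadRes p (c - b)"
    using Q'[of a 0] Q'[of b 0] Q'[of c 0] Q'[of b a] Q'[of c a] Q'[of c b] abc A0 by auto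
  then have "allQR (a,b,c)" unfolding allQR_def by simp
  moreover have "PD (a,b,c)" unfolding PD_def using abc by simp
  moreover have "(a,b,c) \<in> F3" using AF abc by auto
  ultimately show ?thesis unfolding Tset_def by simp
qed

lemma card_fiber_T: assumes A: "A \<in> K0" shows "card {r \<in> Tset. set3 r = A} = 6"
proof -
  have c4: "card A = 4" and A0: "0 \<in> A" and fA: "finite A" using A unfolding K0_def K4_sets_def
    by (auto intro: finite_subset)
  have "card (A - {0}) = 3" using c4 A0 fA by simp
  then obtain x y z where xyz: "A - {0} = {x,y,z}" "x \<noteq> y" "y \<noteq> z" "x \<noteq> z"
    using card_3_iff by metis
  have nz: "x \<noteq> 0" "y \<noteq> 0" "z \<noteq> 0" "x \<in> A" "y \<in> A" "z \<in> A" using xyz(1) by auto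
  have Aeq: "A = {0,x,y,z}" using xyz(1) A0 by auto
  have "{r \<in> Tset. set3 r = A} = {(x,y,z),(x,z,y),(y,x,z),(y,z,x),(z,x,y),(z,y,x)}"
  proof (intro subset_antisym subsetI)
    fix r assume r: "r \<in> {r \<in> Tset. set3 r = A}"
    obtain a b c where rr: "r = (a,b,c)" by (cases r) auto
    have pd: "PD (a,b,c)" and s: "{0,a,b,c} = A" using r rr unfolding Tset_def set3_def by auto
    have d: "a \<noteq> 0" "b \<noteq> 0" "c \<noteq> 0" "a \<noteq> b" "a \<noteq> c" "b \<noteq> c" using pd unfolding PD_def by auto
    have m: "a \<in> {x,y,z}" "b \<in> {x,y,z}" "c \<in> {x,y,z}" using s d xyz(1) by blast+
    show "r \<in> {(x,y,z),(x,z,y),(y,x,z),(y,z,x),(z,x,y),(z,y,x)}" unfolding rr using m d by auto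
  next
    fix r assume r: "r \<in> {(x,y,z),(x,z,y),(y,x,z),(y,z,x),(z,x,y),(z,y,x)}"
    have T: "r \<in> Tset" using r K0_T[OF A] nz xyz(2-4) by auto
    have "set3 r = A" using r unfolding Aeq set3_def by auto
    then show "r \<in> {r \<in> Tset. set3 r = A}" using T by simp
  qed
  then show ?thesis using xyz(2-4) by simp
qed

lemma finite_T: "finite Tset"
  by (rule finite_subset[of _ F3]) (auto simp: Tset_def)

lemma card_T: "card Tset = 6 * card K0"
proof -
  have fK0: "finite K0" using finite_K4 unfolding K0_def by simp
  have "card Tset = (\<Sum>A\<in>K0. card {r \<in> Tset. set3 r = A})"
    by (rule card_group) (use fK0 finite_T T_K0 in auto)
  also have "\<dots> = (\<Sum>A\<in>K0. 6)" by (rule sum.cong) (auto simp: card_fiber_T)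
  finally show ?thesis by simp
qed

lemma main_facts:
  shows "int (card (S0_pts p)) = int (card (S_pts p)) - 24 * p + 80"
    and "1536 * int (n_K4 p) = (p - 1) * int (card (S0_pts p))"
proof -
  define X1 where "X1 = {x \<in> AA. x \<noteq> replicate 6 0}"
  define X0 where "X0 = {x \<in> AA. \<forall>i<6. x!i \<noteq> 0}"
  have sub: "X0 \<subseteq> X1" unfolding X0_def X1_def
  proof (intro subsetI)
    fix x assume "x \<in> {x \<in> AA. \<forall>i<6. x!i \<noteq> 0}"
    then have "x \<in> AA" "x!0 \<noteq> 0" by auto
    then show "x \<in> {x \<in> AA. x \<noteq> replicate 6 0}" by auto
  qed
  have fX1: "finite X1" unfolding X1_def using finite_AA by simp
  have "card (X1 - X0) = card X1 - card X0" by (rule card_Diff_subset[OF finite_subset[OF sub fX1] sub])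
  moreover have "card X0 \<le> card X1" by (rule card_mono[OF fX1 sub])
  ultimately have e1: "int (card X1) = int (card (X1 - X0)) + int (card X0)" by simp
  have a1: "int (card (X1 - X0)) = (p - 1) * (24 * p - 80)" unfolding X1_def X0_def by (rule card_A1)
  have s1: "int (card X1) = (p - 1) * int (card (S_pts p))" unfolding X1_def by (rule card_S)
  have s0: "int (card X0) = (p - 1) * int (card (S0_pts p))" unfolding X0_def by (rule card_S0)
  have a0: "int (card X0) = 64 * int (card Tset)" unfolding X0_def by (rule card_A0)
  have "(p - 1) * int (card (S_pts p)) = (p - 1) * ((24 * p - 80) + int (card (S0_pts p)))"
    using e1 a1 s1 s0 by (simp add: algebra_simps)
  moreover have "p - 1 \<noteq> 0" using p_gt by simp
  ultimately have "int (card (S_pts p)) = (24 * p - 80) + int (card (S0_pts p))" by simp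
  then show "int (card (S0_pts p)) = int (card (S_pts p)) - 24 * p + 80" by simp
  have "int (card Tset) = 24 * int (n_K4 p)" using card_T card_K0 by simp
  then show "1536 * int (n_K4 p) = (p - 1) * int (card (S0_pts p))" using a0 s0 by simp
qed

end

theorem lemma4p1:
  fixes p :: int
  assumes "prime p" and "p mod 4 = 1"
  shows "int (card (S0_pts p)) = int (card (S_pts p)) - 24 * p + 80 \<and>
         real (n_K4 p) = 1/64 * 1/24 * real_of_int (p - 1) *
           real_of_int (int (card (S_pts p)) - 24 * p + 80)"
proof -
  interpret pp p using assms by unfold_locales
  have e1: "int (card (S0_pts p)) = int (card (S_pts p)) - 24 * p + 80" by (rule main_facts(1))
  have e2: "1536 * int (n_K4 p) = (p - 1) * int (card (S0_pts p))" by (rule main_facts(2))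
  have "real_of_int (1536 * int (n_K4 p)) = real_of_int ((p - 1) * (int (card (S_pts p)) - 24 * p + 80))"
    using e1 e2 by simp
  then have "1536 * real (n_K4 p) = real_of_int (p - 1) * real_of_int (int (card (S_pts p)) - 24 * p + 80)"
    by simp
  then have "real (n_K4 p) = 1/64 * 1/24 * real_of_int (p - 1) *
           real_of_int (int (card (S_pts p)) - 24 * p + 80)" by simp
  with e1 show ?thesis by simp
qed


end
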